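(* Let $G$ be a simple graph with $m$ edges and girth $g(G)\ge 5$. For an edge $uv$ write $G_{uv}=G-\{u,v\}$. Then the number $p(G;5)$ of $5$-matchings of $G$ equals $\frac15$ times \begin{align*} &\frac{1}{24}m(m^4+10m^3+43m^2+54m-328)+\frac54 M_1(G)^2-\frac12\alpha(G)(m-7)-\frac56\alpha_2(G)\\ &-\frac1{12}M_1(G)(2m^3+30m^2+61m-225)+\frac12\beta(G)+\frac1{12}M_2(G)(6m^2+66m-239)\\ &+\frac1{24}F(G)(6m^2+24m-149)+\frac1{12}M_1^4(G)(m+10)+\frac14 M_2^2(G)-EM_2(G)-\frac5{24}M_1^5(G)\\ &+\frac18\sum_{uv\in E(G)}M_1(G_{uv})^2+\frac13\sum_{uv\in E(G)}m(G_{uv})F(G_{uv})-\frac14\sum_{uv\in E(G)}m(G_{uv})^2M_1(G_{uv})\\ &-\sum_{uv\in E(G)}EM_2(G_{uv})+\sum_{uv\in E(G)}m(G_{uv})M_2(G_{uv}), \end{align*} where $M_1(\cdot)^2$ and $m(\cdot)^2$ denote squares of numbers.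
   Context: All graphs are finite, simple and undirected. A $k$-matching is a set of $k$ pairwise vertex-disjoint edges; $p(G;k)$ is the number of $k$-matchings. $m(H)$ is the number of edges of $H$; $G-\{u,v\}$ is obtained by deleting vertices $u,v$. $d_G(v)$ is the degree of $v$; the girth is the length of a shortest cycle. $M_1^\alpha(G)=\sum_v d_G(v)^\alpha$ (exponent on degrees), $M_1=M_1^2$, $F=M_1^3$; $M_2(G)=\sum_{uv\in E(G)}d_G(u)d_G(v)$; $M_2^2(G)=\sum_{uv\in E(G)}d_G(u)^2d_G(v)^2$; $\alpha_\lambda(G)=\sum_{uv\in E(G)}d_G(u)d_G(v)[d_G(u)^\lambda+d_G(v)^\lambda]$, $\alpha=\alpha_1$. For an edge $e=uv$, $d_G(e)=d_G(u)+d_G(v)-2$; $e\sim f$ means distinct edges sharing a vertex, $e\cap f$ is that vertex, and sums over $e\sim f$ are over unordered pairs; $EM_2(G)=\sum_{e\sim f}d_G(e)d_G(f)$; $\beta(G)=\sum_{e\sim f}d_G(e\cap f)(d_G(e)+d_G(f))$. *)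

theory Defs
  imports Main "HOL-Library.Extended_Nat"
begin

definition simple_graph :: "'a set \<Rightarrow> 'a set set \<Rightarrow> bool" where
  "simple_graph V E \<longleftrightarrow> finite V \<and>
     (\<forall>e\<in>E. \<exists>u v. u \<noteq> v \<and> u \<in> V \<and> v \<in> V \<and> e = {u, v})"

definition deg :: "'a set set \<Rightarrow> 'a \<Rightarrow> nat" where
  "deg E v = card {e \<in> E. v \<in> e}"

definition has_cycle_len :: "'a set \<Rightarrow> 'a set set \<Rightarrow> nat \<Rightarrow> bool" where
  "has_cycle_len V E k \<longleftrightarrow> k \<ge> 3 \<and>
     (\<exists>f :: nat \<Rightarrow> 'a. inj_on f {..<k} \<and> f ` {..<k} \<subseteq> V \<and>
        (\<forall>i<k. {f i, f ((i + 1) mod k)} \<in> E))"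

definition girth :: "'a set \<Rightarrow> 'a set set \<Rightarrow> enat" where
  "girth V E = Inf {enat k | k. has_cycle_len V E k}"

definition num_matchings :: "'a set set \<Rightarrow> nat \<Rightarrow> nat" where
  "num_matchings E k = card {M. M \<subseteq> E \<and> card M = k \<and> pairwise disjnt M}"

definition del_verts_V :: "'a set \<Rightarrow> 'a set \<Rightarrow> 'a set" where
  "del_verts_V V S = V - S"

definition del_verts_E :: "'a set set \<Rightarrow> 'a set \<Rightarrow> 'a set set" where
  "del_verts_E E S = {e \<in> E. e \<inter> S = {}}"

definition num_edges :: "'a set set \<Rightarrow> real" where
  "num_edges E = real (card E)"

definition M1pow :: "nat \<Rightarrow> 'a set \<Rightarrow> 'a set set \<Rightarrow> real" where
  "M1pow a V E = (\<Sum>v\<in>V. real (deg E v) ^ a)"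

definition M1 :: "'a set \<Rightarrow> 'a set set \<Rightarrow> real" where
  "M1 V E = M1pow 2 V E"

definition Fidx :: "'a set \<Rightarrow> 'a set set \<Rightarrow> real" where
  "Fidx V E = M1pow 3 V E"

definition M2 :: "'a set set \<Rightarrow> real" where
  "M2 E = (\<Sum>e\<in>E. \<Prod>x\<in>e. real (deg E x))"

definition M2sq :: "'a set set \<Rightarrow> real" where
  "M2sq E = (\<Sum>e\<in>E. \<Prod>x\<in>e. real (deg E x) ^ 2)"

definition alpha_lam :: "nat \<Rightarrow> 'a set set \<Rightarrow> real" where
  "alpha_lam l E = (\<Sum>e\<in>E. (\<Prod>x\<in>e. real (deg E x)) * (\<Sum>x\<in>e. real (deg E x) ^ l))"

definition edeg :: "'a set set \<Rightarrow> 'a set \<Rightarrow> real" where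
  "edeg E e = (\<Sum>x\<in>e. real (deg E x)) - 2"

definition adj_pairs :: "'a set set \<Rightarrow> 'a set set set" where
  "adj_pairs E = {{e, f} | e f. e \<in> E \<and> f \<in> E \<and> e \<noteq> f \<and> e \<inter> f \<noteq> {}}"

definition EM2 :: "'a set set \<Rightarrow> real" where
  "EM2 E = (\<Sum>P\<in>adj_pairs E. \<Prod>e\<in>P. edeg E e)"

definition beta_idx :: "'a set set \<Rightarrow> real" where
  "beta_idx E = (\<Sum>P\<in>adj_pairs E. real (deg E (the_elem (\<Inter>P))) * (\<Sum>e\<in>P. edeg E e))"

end

theory Submission
  imports Defs
begin


definition nb :: "'a set set \<Rightarrow> 'a \<Rightarrow> 'a set" where
  "nb E x = {y. {x,y} \<in> E}"

definition dg :: "'a set set \<Rightarrow> 'a \<Rightarrow> real" where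
  "dg E x = real (deg E x)"

definition AS :: "'a set \<Rightarrow> 'a set set \<Rightarrow> ('a \<Rightarrow> 'a \<Rightarrow> real) \<Rightarrow> real" where
  "AS V E f = (\<Sum>x\<in>V. \<Sum>y\<in>nb E x. f x y)"

lemma sg_finite: "simple_graph V E \<Longrightarrow> finite V"
  by (simp add: simple_graph_def)

lemma sg_edge: "simple_graph V E \<Longrightarrow> e \<in> E \<Longrightarrow> \<exists>u v. u \<noteq> v \<and> u \<in> V \<and> v \<in> V \<and> e = {u, v}"
  by (simp add: simple_graph_def)

lemma sg_subset: "simple_graph V E \<Longrightarrow> E \<subseteq> Pow V"
  by (auto simp: simple_graph_def)

lemma sg_finiteE: "simple_graph V E \<Longrightarrow> finite E"
  by (meson finite_Pow_iff rev_finite_subset sg_finite sg_subset)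

lemma sg_edge_in: "simple_graph V E \<Longrightarrow> {x,y} \<in> E \<Longrightarrow> x \<in> V \<and> y \<in> V \<and> x \<noteq> y"
  unfolding simple_graph_def
  by (metis doubleton_eq_iff insert_absorb2 insert_iff insert_not_empty singleton_insert_inj_eq)

lemma nb_sub: "simple_graph V E \<Longrightarrow> nb E x \<subseteq> V"
  using sg_edge_in unfolding nb_def by fastforce

lemma nb_fin: "simple_graph V E \<Longrightarrow> finite (nb E x)"
  using nb_sub sg_finite finite_subset by metis

lemma nb_irr: "simple_graph V E \<Longrightarrow> x \<notin> nb E x"
  using sg_edge_in unfolding nb_def by fastforce

lemma nb_sym: "y \<in> nb E x \<longleftrightarrow> x \<in> nb E y"
  unfolding nb_def by (simp add: insert_commute)

lemma nb_out: "simple_graph V E \<Longrightarrow> x \<notin> V \<Longrightarrow> nb E x = {}"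
  using sg_edge_in unfolding nb_def by fastforce

lemma inc_eq: "simple_graph V E \<Longrightarrow> {e \<in> E. x \<in> e} = (\<lambda>y. {x,y}) ` nb E x"
proof -
  assume sg: "simple_graph V E"
  show ?thesis
  proof
    show "{e \<in> E. x \<in> e} \<subseteq> (\<lambda>y. {x,y}) ` nb E x"
    proof
      fix e assume "e \<in> {e \<in> E. x \<in> e}"
      then have e: "e \<in> E" "x \<in> e" by auto
      then obtain u v where "e = {u,v}" using sg_edge[OF sg] by blast
      then show "e \<in> (\<lambda>y. {x,y}) ` nb E x" using e unfolding nb_def
        by (auto simp: insert_commute)
    qed
    show "(\<lambda>y. {x,y}) ` nb E x \<subseteq> {e \<in> E. x \<in> e}" unfolding nb_def by auto
  qed
qed

lemma deg_nb: "simple_graph V E \<Longrightarrow> deg E x = card (nb E x)"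
proof -
  assume sg: "simple_graph V E"
  have "inj_on (\<lambda>y. {x,y}) (nb E x)"
    using nb_irr[OF sg] by (auto simp: inj_on_def doubleton_eq_iff)
  then show ?thesis unfolding deg_def inc_eq[OF sg] by (simp add: card_image)
qed

lemma dg_nb: "simple_graph V E \<Longrightarrow> dg E x = real (card (nb E x))"
  by (simp add: dg_def deg_nb)

lemma edge_sum_gen: "simple_graph V E \<Longrightarrow> (\<Sum>e\<in>E. \<Sum>x\<in>e. g x e) = (\<Sum>x\<in>V. \<Sum>y\<in>nb E x. g x {x,y})"
proof -
  assume sg: "simple_graph V E"
  have fE: "finite E" by (rule sg_finiteE[OF sg])
  have fV: "finite V" by (rule sg_finite[OF sg])
  have "(\<Sum>x\<in>V. \<Sum>e\<in>{e\<in>E. x \<in> e}. g x e) = (\<Sum>e\<in>E. \<Sum>x\<in>{x\<in>V. x \<in> e}. g x e)"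
    by (rule sum.swap_restrict[OF fV fE])
  also have "\<dots> = (\<Sum>e\<in>E. \<Sum>x\<in>e. g x e)"
    using sg_subset[OF sg] by (intro sum.cong refl) auto
  finally have 1: "(\<Sum>e\<in>E. \<Sum>x\<in>e. g x e) = (\<Sum>x\<in>V. \<Sum>e\<in>{e\<in>E. x \<in> e}. g x e)" ..
  have "(\<Sum>e\<in>{e\<in>E. x \<in> e}. g x e) = (\<Sum>y\<in>nb E x. g x {x,y})" for x
  proof -
    have "inj_on (\<lambda>y. {x,y}) (nb E x)"
      using nb_irr[OF sg] by (auto simp: inj_on_def doubleton_eq_iff)
    then show ?thesis unfolding inc_eq[OF sg] by (simp add: sum.reindex)
  qed
  with 1 show ?thesis by simp
qed

lemma edge_sum: "simple_graph V E \<Longrightarrow> (\<Sum>e\<in>E. F e) = (1/2) * AS V E (\<lambda>x y. F {x,y})"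
proof -
  assume sg: "simple_graph V E"
  have "(\<Sum>e\<in>E. \<Sum>x\<in>e. F e / 2) = (\<Sum>e\<in>E. F e)"
  proof (intro sum.cong refl)
    fix e assume "e \<in> E"
    then obtain u v where "u \<noteq> v" "e = {u,v}" using sg_edge[OF sg] by blast
    then show "(\<Sum>x\<in>e. F e / 2) = F e" by simp
  qed
  moreover have "(\<Sum>e\<in>E. \<Sum>x\<in>e. F e / 2) = (\<Sum>x\<in>V. \<Sum>y\<in>nb E x. F {x,y} / 2)"
    by (rule edge_sum_gen[OF sg])
  ultimately show ?thesis unfolding AS_def by (simp add: sum_divide_distrib)
qed

lemma AS_swap: "simple_graph V E \<Longrightarrow> AS V E f = AS V E (\<lambda>x y. f y x)"
proof -
  assume sg: "simple_graph V E"
  have fV: "finite V" by (rule sg_finite[OF sg])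
  have "(\<Sum>x\<in>V. \<Sum>y\<in>{y\<in>V. y \<in> nb E x}. f x y) = (\<Sum>y\<in>V. \<Sum>x\<in>{x\<in>V. y \<in> nb E x}. f x y)"
    by (rule sum.swap_restrict[OF fV fV])
  moreover have "\<And>x. {y\<in>V. y \<in> nb E x} = nb E x" using nb_sub[OF sg] by auto
  moreover have "\<And>y. {x\<in>V. y \<in> nb E x} = nb E y" using nb_sub[OF sg] nb_sym by fastforce
  ultimately show ?thesis unfolding AS_def by simp
qed

lemma AS_add: "AS V E (\<lambda>x y. f x y + g x y) = AS V E f + AS V E g"
  unfolding AS_def by (simp add: sum.distrib)
lemma AS_diff: "AS V E (\<lambda>x y. f x y - g x y) = AS V E f - AS V E g"
  unfolding AS_def by (simp add: sum_subtractf)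
lemma AS_cmul: "AS V E (\<lambda>x y. c * f x y) = c * AS V E f"
  unfolding AS_def by (simp add: sum_distrib_left)
lemma AS_left: "simple_graph V E \<Longrightarrow> AS V E (\<lambda>x y. f x * g y) = (\<Sum>x\<in>V. f x * (\<Sum>y\<in>nb E x. g y))"
  unfolding AS_def by (simp add: sum_distrib_left)

lemma sum_dg: "simple_graph V E \<Longrightarrow> (\<Sum>x\<in>V. dg E x) = 2 * real (card E)"
proof -
  assume sg: "simple_graph V E"
  have "real (card E) = (\<Sum>e\<in>E. 1)" by simp
  also have "\<dots> = (1/2) * AS V E (\<lambda>x y. 1)" by (rule edge_sum[OF sg])
  also have "AS V E (\<lambda>x y. 1) = (\<Sum>x\<in>V. dg E x)" unfolding AS_def by (simp add: dg_nb[OF sg])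
  finally show ?thesis by simp
qed


definition MS :: "'a set set \<Rightarrow> nat \<Rightarrow> 'a set set set" where
  "MS E k = {M. M \<subseteq> E \<and> card M = k \<and> pairwise disjnt M}"

lemma MS_ins:
  assumes fE: "finite E" and ne: "{} \<notin> E" and e: "e \<in> E"
  shows "{M \<in> MS E (Suc j). e \<in> M} = insert e ` MS (del_verts_E E e) j"
proof
  show "{M \<in> MS E (Suc j). e \<in> M} \<subseteq> insert e ` MS (del_verts_E E e) j"
  proof
    fix M assume M: "M \<in> {M \<in> MS E (Suc j). e \<in> M}"
    then have ME: "M \<subseteq> E" "card M = Suc j" "pairwise disjnt M" "e \<in> M" by (auto simp: MS_def)
    have fM: "finite M" using ME(1) fE finite_subset by blast
    have "M - {e} \<subseteq> del_verts_E E e"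
    proof
      fix f assume f: "f \<in> M - {e}"
      then have "disjnt f e" using ME(3,4) unfolding pairwise_def by blast
      then show "f \<in> del_verts_E E e" using f ME(1) unfolding del_verts_E_def disjnt_def by auto
    qed
    moreover have "card (M - {e}) = j" using ME(2,4) fM by simp
    moreover have "pairwise disjnt (M - {e})" using ME(3) pairwise_subset by blast
    ultimately have "M - {e} \<in> MS (del_verts_E E e) j" unfolding MS_def by blast
    moreover have "M = insert e (M - {e})" using ME(4) by blast
    ultimately show "M \<in> insert e ` MS (del_verts_E E e) j" by blast
  qed
  show "insert e ` MS (del_verts_E E e) j \<subseteq> {M \<in> MS E (Suc j). e \<in> M}"
  proof
    fix M assume "M \<in> insert e ` MS (del_verts_E E e) j"
    then obtain M' where M': "M = insert e M'" "M' \<subseteq> del_verts_E E e" "card M' = j" "pairwise disjnt M'"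
      unfolding MS_def by blast
    have enot: "e \<notin> M'" using M'(2) e ne unfolding del_verts_E_def by auto
    have sub: "M' \<subseteq> E" using M'(2) unfolding del_verts_E_def by auto
    have fM': "finite M'" using sub fE finite_subset by blast
    have "pairwise disjnt M"
      unfolding M'(1) pairwise_insert using M'(2,4) unfolding del_verts_E_def disjnt_def
      by (auto simp: Int_commute)
    moreover have "card M = Suc j" using M'(1,3) enot fM' by simp
    moreover have "M \<subseteq> E" using M'(1) sub e by auto
    ultimately show "M \<in> {M \<in> MS E (Suc j). e \<in> M}" unfolding MS_def using M'(1) by blast
  qed
qed

lemma MS_rec:
  assumes fE: "finite E" and ne: "{} \<notin> E"
  shows "real (Suc j) * real (num_matchings E (Suc j)) = (\<Sum>e\<in>E. real (num_matchings (del_verts_E E e) j))"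
proof -
  have nm: "num_matchings F k = card (MS F k)" for F k unfolding num_matchings_def MS_def ..
  have fMS: "finite (MS E (Suc j))" unfolding MS_def
    by (rule finite_subset[of _ "Pow E"]) (use fE in auto)
  have "(\<Sum>M\<in>MS E (Suc j). card M) = Suc j * card (MS E (Suc j))"
    by (simp add: MS_def)
  moreover have "(\<Sum>M\<in>MS E (Suc j). card M) = (\<Sum>M\<in>MS E (Suc j). \<Sum>e\<in>{e\<in>E. e \<in> M}. (1::nat))"
  proof (intro sum.cong refl)
    fix M assume "M \<in> MS E (Suc j)"
    then have "{e\<in>E. e \<in> M} = M" by (auto simp: MS_def)
    then show "card M = (\<Sum>e\<in>{e\<in>E. e \<in> M}. (1::nat))" by simp
  qed
  moreover have "(\<Sum>M\<in>MS E (Suc j). \<Sum>e\<in>{e\<in>E. e \<in> M}. (1::nat)) = (\<Sum>e\<in>E. \<Sum>M\<in>{M\<in>MS E (Suc j). e \<in> M}. 1)"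
    by (rule sum.swap_restrict[OF fMS fE])
  moreover have "(\<Sum>M\<in>{M\<in>MS E (Suc j). e \<in> M}. (1::nat)) = num_matchings (del_verts_E E e) j" if e: "e \<in> E" for e
  proof -
    have "inj_on (insert e) (MS (del_verts_E E e) j)"
    proof (rule inj_onI)
      fix A B assume "A \<in> MS (del_verts_E E e) j" "B \<in> MS (del_verts_E E e) j" "insert e A = insert e B"
      moreover have "e \<notin> A" "e \<notin> B" using calculation(1,2) e ne unfolding MS_def del_verts_E_def by auto
      ultimately show "A = B" by (metis insert_ident)
    qed
    then show ?thesis using MS_ins[OF fE ne e] by (simp add: card_image nm)
  qed
  ultimately have "Suc j * num_matchings E (Suc j) = (\<Sum>e\<in>E. num_matchings (del_verts_E E e) j)"
    by (simp add: nm)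
  then show ?thesis by (metis of_nat_mult of_nat_sum)
qed

lemma MS_zero: "finite E \<Longrightarrow> num_matchings E 0 = 1"
proof -
  assume fE: "finite E"
  have "{M. M \<subseteq> E \<and> card M = 0 \<and> pairwise disjnt M} = {{}}"
    using fE by (auto simp: card_eq_0_iff dest: finite_subset)
  then show ?thesis unfolding num_matchings_def by simp
qed


definition trifree :: "'a set set \<Rightarrow> bool" where
  "trifree E \<longleftrightarrow> (\<forall>u v w. {u,v} \<in> E \<longrightarrow> {v,w} \<in> E \<longrightarrow> {u,w} \<notin> E)"

definition c4free :: "'a set set \<Rightarrow> bool" where
  "c4free E \<longleftrightarrow> (\<forall>u x y v. {u,x} \<in> E \<longrightarrow> {x,y} \<in> E \<longrightarrow> {y,v} \<in> E \<longrightarrow> {v,u} \<in> E \<longrightarrow> x \<noteq> v \<longrightarrow> u \<noteq> y \<longrightarrow> False)"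

definition good :: "'a set \<Rightarrow> 'a set set \<Rightarrow> bool" where
  "good V E \<longleftrightarrow> simple_graph V E \<and> trifree E \<and> c4free E"

lemma del_sub: "del_verts_E E e \<subseteq> E" unfolding del_verts_E_def by auto

lemma del_sg: "simple_graph V E \<Longrightarrow> simple_graph (V - e) (del_verts_E E e)"
proof -
  assume sg: "simple_graph V E"
  show ?thesis unfolding simple_graph_def
  proof (intro conjI ballI)
    show "finite (V - e)" using sg_finite[OF sg] by simp
    fix f assume f: "f \<in> del_verts_E E e"
    then have "f \<in> E" "f \<inter> e = {}" unfolding del_verts_E_def by auto
    then obtain x y where "x \<noteq> y" "x \<in> V" "y \<in> V" "f = {x,y}" using sg_edge[OF sg] by blast
    with \<open>f \<inter> e = {}\<close> show "\<exists>x y. x \<noteq> y \<and> x \<in> V - e \<and> y \<in> V - e \<and> f = {x, y}" by auto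
  qed
qed

lemma del_good: "good V E \<Longrightarrow> good (V - e) (del_verts_E E e)"
  unfolding good_def trifree_def c4free_def using del_sg del_sub by blast

lemma nb_del: "nb (del_verts_E E e) x = (if x \<in> e then {} else nb E x - e)"
  unfolding nb_def del_verts_E_def by auto

definition ss :: "'a set set \<Rightarrow> 'a \<Rightarrow> real" where "ss F x = (\<Sum>y\<in>nb F x. dg F y)"

locale ectx =
  fixes V :: "'a set" and E :: "'a set set" and u v :: 'a
  assumes gd: "good V E" and uv: "{u,v} \<in> E"
begin

abbreviation "E' \<equiv> del_verts_E E {u,v}"
abbreviation "W \<equiv> V - {u,v}"

lemma sg: "simple_graph V E" using gd good_def by blast
lemma tri: "{x,y} \<in> E \<Longrightarrow> {y,z} \<in> E \<Longrightarrow> {x,z} \<notin> E" using gd unfolding good_def trifree_def by blast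
lemma c4: "{x,y} \<in> E \<Longrightarrow> {y,z} \<in> E \<Longrightarrow> {z,w} \<in> E \<Longrightarrow> {w,x} \<in> E \<Longrightarrow> y \<noteq> w \<Longrightarrow> x \<noteq> z \<Longrightarrow> False"
  using gd unfolding good_def c4free_def by blast

lemma sg': "simple_graph W E'" using del_sg[OF sg] .
lemma uvV: "u \<in> V" "v \<in> V" "u \<noteq> v" using sg_edge_in[OF sg uv] by auto
lemma vnu: "v \<in> nb E u" "u \<in> nb E v" using uv by (auto simp: nb_def insert_commute)

lemma fV: "finite V" using sg_finite[OF sg] .
lemma fW: "finite W" using fV by simp

lemma notboth: "x \<in> nb E u \<Longrightarrow> x \<notin> nb E v"
  using tri[of x u v] uv unfolding nb_def by (auto simp: insert_commute)

definition cu :: "'a \<Rightarrow> real" where "cu x = (if x \<in> nb E u then 1 else 0)"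
definition cv :: "'a \<Rightarrow> real" where "cv x = (if x \<in> nb E v then 1 else 0)"

lemma nb'_W: "x \<in> W \<Longrightarrow> nb E' x = nb E x - {u,v}"
  by (simp add: nb_del)

lemma dg'_W: "x \<in> W \<Longrightarrow> dg E' x = dg E x - cu x - cv x"
proof -
  assume x: "x \<in> W"
  have fin: "finite (nb E x)" using nb_fin[OF sg] .
  have "nb E x - {u,v} = (nb E x - {u}) - {v}" by auto
  then have c: "card (nb E x - {u,v}) = card (nb E x) - (if u \<in> nb E x then 1 else 0) - (if v \<in> nb E x then 1 else 0)"
    using fin uvV(3) by (simp add: card_Diff_singleton_if)
  have le: "(if u \<in> nb E x then 1 else 0) + (if v \<in> nb E x then 1 else 0) \<le> card (nb E x)"
  proof -
    have "{u,v} \<inter> nb E x \<subseteq> nb E x" by auto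
    then have "card ({u,v} \<inter> nb E x) \<le> card (nb E x)" using fin card_mono by blast
    moreover have "card ({u,v} \<inter> nb E x) = (if u \<in> nb E x then 1 else 0) + (if v \<in> nb E x then 1 else 0)"
      using uvV(3) by auto
    ultimately show ?thesis by simp
  qed
  show ?thesis
    unfolding dg_nb[OF sg'] dg_nb[OF sg] nb'_W[OF x] c cu_def cv_def
    using le by (auto simp: nb_sym[of u] nb_sym[of v] of_nat_diff)
qed

lemma cuv: "x \<in> W \<Longrightarrow> cu x * cv x = 0"
  using notboth unfolding cu_def cv_def by auto

lemma sumW_cu: "(\<Sum>x\<in>W. cu x * f x) = (\<Sum>x\<in>nb E u. f x) - f v"
proof -
  have "(\<Sum>x\<in>W. cu x * f x) = (\<Sum>x\<in>W. if x \<in> nb E u then f x else 0)"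
    unfolding cu_def by (intro sum.cong) auto
  also have "\<dots> = (\<Sum>x\<in>{x\<in>W. x \<in> nb E u}. f x)" by (rule sum.inter_filter[symmetric, OF fW])
  also have "{x\<in>W. x \<in> nb E u} = nb E u - {v}" using nb_sub[OF sg] nb_irr[OF sg, of u] by auto
  also have "(\<Sum>x\<in>nb E u - {v}. f x) = (\<Sum>x\<in>nb E u. f x) - f v"
    using nb_fin[OF sg] vnu by (simp add: sum_diff1)
  finally show ?thesis .
qed

lemma sumW_cv: "(\<Sum>x\<in>W. cv x * f x) = (\<Sum>x\<in>nb E v. f x) - f u"
proof -
  have "(\<Sum>x\<in>W. cv x * f x) = (\<Sum>x\<in>W. if x \<in> nb E v then f x else 0)"
    unfolding cv_def by (intro sum.cong) auto
  also have "\<dots> = (\<Sum>x\<in>{x\<in>W. x \<in> nb E v}. f x)" by (rule sum.inter_filter[symmetric, OF fW])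
  also have "{x\<in>W. x \<in> nb E v} = nb E v - {u}" using nb_sub[OF sg] nb_irr[OF sg, of v] by auto
  also have "(\<Sum>x\<in>nb E v - {u}. f x) = (\<Sum>x\<in>nb E v. f x) - f u"
    using nb_fin[OF sg] vnu by (simp add: sum_diff1)
  finally show ?thesis .
qed

lemma sumV_split: "(\<Sum>x\<in>V. f x) = f u + f v + (\<Sum>x\<in>W. f x)"
proof -
  have "(\<Sum>x\<in>V. f x) = (\<Sum>x\<in>{u,v}. f x) + (\<Sum>x\<in>W. f x)"
    using fV uvV by (metis Diff_subset_conv sum.subset_diff le_sup_iff subset_refl
      insert_subset empty_subsetI add.commute)
  then show ?thesis using uvV(3) by simp
qed

lemma vsum_del: fixes g :: "real \<Rightarrow> real" shows "(\<Sum>x\<in>W. g (dg E' x)) = (\<Sum>x\<in>V. g (dg E x)) - g (dg E u) - g (dg E v)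
   - ((\<Sum>x\<in>nb E u. g (dg E x) - g (dg E x - 1)) - (g (dg E v) - g (dg E v - 1)))
   - ((\<Sum>x\<in>nb E v. g (dg E x) - g (dg E x - 1)) - (g (dg E u) - g (dg E u - 1)))"
proof -
  have "g (dg E' x) = g (dg E x) - cu x * (g (dg E x) - g (dg E x - 1)) - cv x * (g (dg E x) - g (dg E x - 1))"
    if x: "x \<in> W" for x
    using dg'_W[OF x] cuv[OF x] unfolding cu_def cv_def by (auto split: if_splits)
  then have "(\<Sum>x\<in>W. g (dg E' x)) = (\<Sum>x\<in>W. g (dg E x)) - (\<Sum>x\<in>W. cu x * (g (dg E x) - g (dg E x - 1)))
      - (\<Sum>x\<in>W. cv x * (g (dg E x) - g (dg E x - 1)))"
    by (simp add: sum_subtractf)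
  then show ?thesis unfolding sumW_cu sumW_cv using sumV_split[of "\<lambda>x. g (dg E x)"] by simp
qed

lemma card_del: "real (card E') = real (card E) + 1 - dg E u - dg E v"
proof -
  have fE: "finite E" using sg_finiteE[OF sg] .
  let ?A = "{f\<in>E. u \<in> f}" and ?B = "{f\<in>E. v \<in> f}"
  have AB: "?A \<inter> ?B = {{u,v}}"
  proof
    show "?A \<inter> ?B \<subseteq> {{u,v}}"
    proof
      fix f assume "f \<in> ?A \<inter> ?B"
      then obtain x y where "f = {x,y}" "f \<in> E" "u \<in> f" "v \<in> f" using sg_edge[OF sg] by blast
      then show "f \<in> {{u,v}}" using uvV(3) by auto
    qed
    show "{{u,v}} \<subseteq> ?A \<inter> ?B" using uv by auto
  qed
  have E: "E = E' \<union> (?A \<union> ?B)" unfolding del_verts_E_def by auto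
  have disj: "E' \<inter> (?A \<union> ?B) = {}" unfolding del_verts_E_def by auto
  have "card E = card E' + card (?A \<union> ?B)"
    using E disj fE by (metis card_Un_disjoint finite_Un)
  moreover have "card (?A \<union> ?B) + card (?A \<inter> ?B) = card ?A + card ?B"
    using card_Un_Int[of ?A ?B] fE by simp
  moreover have "card ?A = deg E u" "card ?B = deg E v" unfolding deg_def by auto
  ultimately show ?thesis unfolding dg_def using AB by simp
qed

lemma cc0: assumes x: "x \<in> W" and y: "y \<in> nb E x" "y \<notin> {u,v}"
  shows "(cu x + cv x) * (cu y + cv y) = 0"
proof -
  have xy: "{x,y} \<in> E" using y unfolding nb_def by auto
  have xuv: "x \<noteq> u" "x \<noteq> v" using x by auto
  have "\<not> (x \<in> nb E u \<and> y \<in> nb E u)" using tri[of u x y] xy unfolding nb_def by auto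
  moreover have "\<not> (x \<in> nb E v \<and> y \<in> nb E v)" using tri[of v x y] xy unfolding nb_def by auto
  moreover have "\<not> (x \<in> nb E u \<and> y \<in> nb E v)"
    using c4[of u x y v] xy uv xuv y(2) unfolding nb_def by (auto simp: insert_commute)
  moreover have "\<not> (x \<in> nb E v \<and> y \<in> nb E u)"
    using c4[of v x y u] xy uv xuv y(2) unfolding nb_def by (auto simp: insert_commute)
  ultimately show ?thesis unfolding cu_def cv_def by auto
qed

lemma nbx_split: "x \<in> W \<Longrightarrow> (\<Sum>y\<in>nb E x - {u,v}. h y) = (\<Sum>y\<in>nb E x. h y) - cu x * h u - cv x * h v"
proof -
  assume x: "x \<in> W"
  have fin: "finite (nb E x)" using nb_fin[OF sg] .
  have "(\<Sum>y\<in>nb E x. h y) = (\<Sum>y\<in>nb E x - {u,v}. h y) + (\<Sum>y\<in>nb E x \<inter> {u,v}. h y)"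
    using fin by (metis Diff_Diff_Int Diff_subset Int_lower1 add.commute sum.subset_diff)
  moreover have "(\<Sum>y\<in>nb E x \<inter> {u,v}. h y) = cu x * h u + cv x * h v"
    using uvV(3) unfolding cu_def cv_def by (auto simp: nb_sym[of u] nb_sym[of v] Int_insert_right)
  ultimately show ?thesis by simp
qed

lemma nbW: "x \<in> W \<Longrightarrow> y \<in> nb E x - {u,v} \<Longrightarrow> y \<in> W"
  using nb_sub[OF sg] by auto

lemma cu01: "cu x * cu x = cu x" "cv x * cv x = cv x" unfolding cu_def cv_def by auto

lemma sum_nb_const: "(\<Sum>y\<in>nb E x. c) = dg E x * c"
  by (simp add: dg_nb[OF sg])

lemma Q11_del: "AS W E' (\<lambda>x y. dg E' x * dg E' y) = AS V E (\<lambda>x y. dg E x * dg E y)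
   - dg E u * ss E u - dg E v * ss E v - dg E u * (ss E u - dg E v) - dg E v * (ss E v - dg E u)
   - 2 * (((\<Sum>x\<in>nb E u. ss E x) - ss E v - dg E u * (dg E u - 1))
        + ((\<Sum>x\<in>nb E v. ss E x) - ss E u - dg E v * (dg E v - 1)))"
proof -
  define c where "c x = cu x + cv x" for x
  have 1: "AS W E' (\<lambda>x y. dg E' x * dg E' y) = AS W E' (\<lambda>x y. dg E x * dg E y - c x * dg E y - dg E x * c y)"
    unfolding AS_def
  proof (rule sum.cong[OF refl])
    fix x assume x: "x \<in> W"
    show "(\<Sum>y\<in>nb E' x. dg E' x * dg E' y) = (\<Sum>y\<in>nb E' x. dg E x * dg E y - c x * dg E y - dg E x * c y)"
    proof (rule sum.cong[OF refl])
      fix y assume y: "y \<in> nb E' x"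
      then have y': "y \<in> nb E x" "y \<notin> {u,v}" "y \<in> W" using nb'_W[OF x] nbW[OF x] by auto
      have "c x * c y = 0" using cc0[OF x y'(1,2)] unfolding c_def .
      then show "dg E' x * dg E' y = dg E x * dg E y - c x * dg E y - dg E x * c y"
        unfolding dg'_W[OF x] dg'_W[OF y'(3)] c_def by (simp add: algebra_simps)
    qed
  qed
  have 2: "AS W E' (\<lambda>x y. dg E x * c y) = AS W E' (\<lambda>x y. c x * dg E y)"
    using AS_swap[OF sg', of "\<lambda>x y. dg E x * c y"] by (simp add: mult.commute)
  have 3: "AS W E' (\<lambda>x y. dg E x * dg E y) = (\<Sum>x\<in>V. dg E x * ss E x) - dg E u * ss E u - dg E v * ss E v
      - dg E u * (ss E u - dg E v) - dg E v * (ss E v - dg E u)"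
  proof -
    have "AS W E' (\<lambda>x y. dg E x * dg E y) = (\<Sum>x\<in>W. dg E x * ss E x - dg E u * (cu x * dg E x) - dg E v * (cv x * dg E x))"
      unfolding AS_def
    proof (rule sum.cong[OF refl])
      fix x assume x: "x \<in> W"
      show "(\<Sum>y\<in>nb E' x. dg E x * dg E y) = dg E x * ss E x - dg E u * (cu x * dg E x) - dg E v * (cv x * dg E x)"
        unfolding nb'_W[OF x] sum_distrib_left[symmetric] nbx_split[OF x] ss_def by (simp add: algebra_simps)
    qed
    also have "\<dots> = (\<Sum>x\<in>W. dg E x * ss E x) - dg E u * (\<Sum>x\<in>W. cu x * dg E x) - dg E v * (\<Sum>x\<in>W. cv x * dg E x)"
      by (simp add: sum_subtractf sum_distrib_left)
    finally show ?thesis unfolding sumW_cu sumW_cv ss_def[symmetric]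
      using sumV_split[of "\<lambda>x. dg E x * ss E x"] by simp
  qed
  have 4: "AS W E' (\<lambda>x y. c x * dg E y) = ((\<Sum>x\<in>nb E u. ss E x) - ss E v - dg E u * (dg E u - 1))
        + ((\<Sum>x\<in>nb E v. ss E x) - ss E u - dg E v * (dg E v - 1))"
  proof -
    have "AS W E' (\<lambda>x y. c x * dg E y) = (\<Sum>x\<in>W. cu x * (ss E x - dg E u) + cv x * (ss E x - dg E v))"
      unfolding AS_def
    proof (rule sum.cong[OF refl])
      fix x assume x: "x \<in> W"
      have "c x * (ss E x - cu x * dg E u - cv x * dg E v) = cu x * (ss E x - dg E u) + cv x * (ss E x - dg E v)"
        unfolding c_def by (simp add: algebra_simps cuv[OF x] cu01 mult.commute[of "cv x" "cu x"])
      then show "(\<Sum>y\<in>nb E' x. c x * dg E y) = cu x * (ss E x - dg E u) + cv x * (ss E x - dg E v)"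
        unfolding nb'_W[OF x] sum_distrib_left[symmetric] nbx_split[OF x] ss_def by simp
    qed
    also have "\<dots> = (\<Sum>x\<in>W. cu x * (ss E x - dg E u)) + (\<Sum>x\<in>W. cv x * (ss E x - dg E v))"
      by (simp add: sum.distrib)
    also have "\<dots> = ((\<Sum>x\<in>nb E u. ss E x) - ss E v - dg E u * (dg E u - 1))
        + ((\<Sum>x\<in>nb E v. ss E x) - ss E u - dg E v * (dg E v - 1))"
      unfolding sumW_cu sumW_cv by (simp add: sum_subtractf sum_nb_const algebra_simps dg_nb[OF sg])
    finally show ?thesis .
  qed
  have 5: "(\<Sum>x\<in>V. dg E x * ss E x) = AS V E (\<lambda>x y. dg E x * dg E y)"
    unfolding AS_left[OF sg] ss_def ..
  show ?thesis unfolding 1 AS_diff 2 3 4 5 by simp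
qed

end


definition SS :: "'a set set \<Rightarrow> nat \<Rightarrow> 'a \<Rightarrow> real" where "SS F j x = (\<Sum>y\<in>nb F x. dg F y ^ j)"
definition s2 :: "'a set set \<Rightarrow> 'a \<Rightarrow> real" where "s2 F x = (\<Sum>y\<in>nb F x. ss F y)"
definition Qa :: "nat \<Rightarrow> nat \<Rightarrow> 'a set \<Rightarrow> 'a set set \<Rightarrow> real" where
  "Qa i j V E = AS V E (\<lambda>x y. dg E x ^ i * dg E y ^ j)"
definition Ra :: "'a set \<Rightarrow> 'a set set \<Rightarrow> real" where "Ra V E = (\<Sum>x\<in>V. ss E x ^ 2)"

lemma AS_cong: "(\<And>x y. x \<in> V \<Longrightarrow> y \<in> nb E x \<Longrightarrow> f x y = g x y) \<Longrightarrow> AS V E f = AS V E g"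
  unfolding AS_def by (intro sum.cong refl) auto

context fixes V :: "'a set" and E :: "'a set set" assumes sg: "simple_graph V E"
begin

lemma AS_u: "AS V E (\<lambda>x y. f x) = (\<Sum>x\<in>V. dg E x * f x)"
  unfolding AS_def by (simp add: dg_nb[OF sg])
lemma AS_v: "AS V E (\<lambda>x y. f y) = (\<Sum>x\<in>V. dg E x * f x)"
  using AS_swap[OF sg, of "\<lambda>x y. f y"] AS_u by simp
lemma M1pow_dg: "M1pow k V E = (\<Sum>x\<in>V. dg E x ^ k)" unfolding M1pow_def dg_def ..

lemma at1: "AS V E (\<lambda>u v. 1) = 2 * real (card E)"
  using AS_u[of "\<lambda>x. 1"] sum_dg[OF sg] by simp
lemma atPu: "AS V E (\<lambda>u v. dg E u ^ k) = M1pow (Suc k) V E"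
  unfolding AS_u M1pow_dg by (simp add: mult.commute)
lemma atPv: "AS V E (\<lambda>u v. dg E v ^ k) = M1pow (Suc k) V E"
  unfolding AS_v M1pow_dg by (simp add: mult.commute)
lemma atP1u: "AS V E (\<lambda>u v. dg E u) = M1pow 2 V E" using atPu[of 1] by (simp add: numeral_2_eq_2)
lemma atP1v: "AS V E (\<lambda>u v. dg E v) = M1pow 2 V E" using atPv[of 1] by (simp add: numeral_2_eq_2)
lemma atP2u: "AS V E (\<lambda>u v. dg E u ^ 2) = M1pow 3 V E" using atPu[of 2] by (simp add: numeral_3_eq_3)
lemma atP2v: "AS V E (\<lambda>u v. dg E v ^ 2) = M1pow 3 V E" using atPv[of 2] by (simp add: numeral_3_eq_3)
lemma atP3u: "AS V E (\<lambda>u v. dg E u ^ 3) = M1pow 4 V E" using atPu[of 3] by (simp add: eval_nat_numeral)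
lemma atP3v: "AS V E (\<lambda>u v. dg E v ^ 3) = M1pow 4 V E" using atPv[of 3] by (simp add: eval_nat_numeral)
lemma atP4u: "AS V E (\<lambda>u v. dg E u ^ 4) = M1pow 5 V E" using atPu[of 4] by (simp add: eval_nat_numeral)
lemma atP4v: "AS V E (\<lambda>u v. dg E v ^ 4) = M1pow 5 V E" using atPv[of 4] by (simp add: eval_nat_numeral)

lemma Qa_swap: "Qa i j V E = Qa j i V E"
  unfolding Qa_def using AS_swap[OF sg, of "\<lambda>x y. dg E x ^ i * dg E y ^ j"] by (simp add: mult.commute)

lemma atQ11: "AS V E (\<lambda>u v. dg E u * dg E v) = Qa 1 1 V E" unfolding Qa_def by simp
lemma atQ21: "AS V E (\<lambda>u v. dg E u ^ 2 * dg E v) = Qa 2 1 V E" unfolding Qa_def by simp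
lemma atQ12: "AS V E (\<lambda>u v. dg E u * dg E v ^ 2) = Qa 2 1 V E"
  using Qa_swap[of 1 2] unfolding Qa_def by simp
lemma atQ31: "AS V E (\<lambda>u v. dg E u ^ 3 * dg E v) = Qa 3 1 V E" unfolding Qa_def by simp
lemma atQ13: "AS V E (\<lambda>u v. dg E u * dg E v ^ 3) = Qa 3 1 V E"
  using Qa_swap[of 1 3] unfolding Qa_def by simp
lemma atQ22: "AS V E (\<lambda>u v. dg E u ^ 2 * dg E v ^ 2) = Qa 2 2 V E" unfolding Qa_def by simp

lemma sum_dg_ss: "(\<Sum>x\<in>V. dg E x * ss E x) = Qa 1 1 V E"
  unfolding Qa_def AS_left[OF sg] ss_def by simp
lemma atsu: "AS V E (\<lambda>u v. ss E u) = Qa 1 1 V E" unfolding AS_u sum_dg_ss ..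
lemma atsv: "AS V E (\<lambda>u v. ss E v) = Qa 1 1 V E" unfolding AS_v sum_dg_ss ..
lemma sum_dg2_ss: "(\<Sum>x\<in>V. dg E x * (dg E x * ss E x)) = Qa 2 1 V E"
  unfolding Qa_def AS_left[OF sg] ss_def by (simp add: power2_eq_square mult.assoc)
lemma atusu: "AS V E (\<lambda>u v. dg E u * ss E u) = Qa 2 1 V E" unfolding AS_u sum_dg2_ss ..
lemma atvsv: "AS V E (\<lambda>u v. dg E v * ss E v) = Qa 2 1 V E" unfolding AS_v sum_dg2_ss ..
lemma atvsu: "AS V E (\<lambda>u v. dg E v * ss E u) = Ra V E"
proof -
  have "AS V E (\<lambda>u v. dg E v * ss E u) = AS V E (\<lambda>u v. ss E u * dg E v)" by (simp add: mult.commute)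
  also have "\<dots> = (\<Sum>x\<in>V. ss E x * ss E x)" unfolding AS_left[OF sg] ss_def ..
  finally show ?thesis unfolding Ra_def by (simp add: power2_eq_square)
qed
lemma atusv: "AS V E (\<lambda>u v. dg E u * ss E v) = Ra V E"
  using AS_swap[OF sg, of "\<lambda>u v. dg E u * ss E v"] atvsu by simp
lemma atS2u: "AS V E (\<lambda>u v. SS E 2 u) = Qa 2 1 V E"
  unfolding AS_u SS_def using atQ12 AS_left[OF sg, of "\<lambda>x. dg E x" "\<lambda>y. dg E y ^ 2"] by simp
lemma atS2v: "AS V E (\<lambda>u v. SS E 2 v) = Qa 2 1 V E"
  using AS_swap[OF sg, of "\<lambda>u v. SS E 2 v"] atS2u by simp
lemma atS3u: "AS V E (\<lambda>u v. SS E 3 u) = Qa 3 1 V E"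
  unfolding AS_u SS_def using atQ13 AS_left[OF sg, of "\<lambda>x. dg E x" "\<lambda>y. dg E y ^ 3"] by simp
lemma atS3v: "AS V E (\<lambda>u v. SS E 3 v) = Qa 3 1 V E"
  using AS_swap[OF sg, of "\<lambda>u v. SS E 3 v"] atS3u by simp
lemma ats2u: "AS V E (\<lambda>u v. s2 E u) = Ra V E"
  unfolding AS_u s2_def using atusv AS_left[OF sg, of "\<lambda>x. dg E x" "\<lambda>y. ss E y"] by simp
lemma ats2v: "AS V E (\<lambda>u v. s2 E v) = Ra V E"
  using AS_swap[OF sg, of "\<lambda>u v. s2 E v"] ats2u by simp

lemmas atoms = at1 atP1u atP1v atP2u atP2v atP3u atP3v atP4u atP4v atQ11 atQ21 atQ12 atQ31 atQ13 atQ22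
  atsu atsv atusu atvsv atvsu atusv atS2u atS2v atS3u atS3v ats2u ats2v

end


lemma sum_poly_nb: assumes sg: "simple_graph V E"
  shows "(\<Sum>y\<in>nb E x. c0 + c1 * dg E y + c2 * dg E y ^ 2 + c3 * dg E y ^ 3) = c0 * dg E x + c1 * ss E x + c2 * SS E 2 x + c3 * SS E 3 x"
  unfolding ss_def SS_def by (simp add: sum.distrib sum_distrib_left[symmetric] dg_nb[OF sg] mult.commute)

context ectx begin

lemma D2: "(\<Sum>x\<in>nb E w. dg E x ^ 2 - (dg E x - 1) ^ 2) = 2 * ss E w - dg E w"
proof -
  have "(\<Sum>x\<in>nb E w. dg E x ^ 2 - (dg E x - 1) ^ 2) = (\<Sum>x\<in>nb E w. (-1) + 2 * dg E x + 0 * dg E x ^ 2 + 0 * dg E x ^ 3)"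
    by (intro sum.cong refl) (simp add: power2_eq_square algebra_simps)
  then show ?thesis unfolding sum_poly_nb[OF sg] by simp
qed
lemma D3: "(\<Sum>x\<in>nb E w. dg E x ^ 3 - (dg E x - 1) ^ 3) = 3 * SS E 2 w - 3 * ss E w + dg E w"
proof -
  have "(\<Sum>x\<in>nb E w. dg E x ^ 3 - (dg E x - 1) ^ 3) = (\<Sum>x\<in>nb E w. 1 + (-3) * dg E x + 3 * dg E x ^ 2 + 0 * dg E x ^ 3)"
    by (intro sum.cong refl) (simp add: power2_eq_square power3_eq_cube algebra_simps)
  then show ?thesis unfolding sum_poly_nb[OF sg] by simp
qed
lemma D4: "(\<Sum>x\<in>nb E w. dg E x ^ 4 - (dg E x - 1) ^ 4) = 4 * SS E 3 w - 6 * SS E 2 w + 4 * ss E w - dg E w"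
proof -
  have "(\<Sum>x\<in>nb E w. dg E x ^ 4 - (dg E x - 1) ^ 4) = (\<Sum>x\<in>nb E w. (-1) + 4 * dg E x + (-6) * dg E x ^ 2 + 4 * dg E x ^ 3)"
    by (intro sum.cong refl) (simp add: eval_nat_numeral algebra_simps)
  then show ?thesis unfolding sum_poly_nb[OF sg] by simp
qed

lemma Pke: "M1pow k W E' = M1pow k V E - dg E u ^ k - dg E v ^ k
   - ((\<Sum>x\<in>nb E u. dg E x ^ k - (dg E x - 1) ^ k) - (dg E v ^ k - (dg E v - 1) ^ k))
   - ((\<Sum>x\<in>nb E v. dg E x ^ k - (dg E x - 1) ^ k) - (dg E u ^ k - (dg E u - 1) ^ k))"
  using vsum_del[of "\<lambda>t. t ^ k"] unfolding M1pow_def dg_def by simp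

lemma P2e: "M1pow 2 W E' = M1pow 2 V E - dg E u ^ 2 - dg E v ^ 2
   - ((2 * ss E u - dg E u) - (dg E v ^ 2 - (dg E v - 1) ^ 2))
   - ((2 * ss E v - dg E v) - (dg E u ^ 2 - (dg E u - 1) ^ 2))"
  using Pke[of 2] unfolding D2 .
lemma P3e: "M1pow 3 W E' = M1pow 3 V E - dg E u ^ 3 - dg E v ^ 3
   - ((3 * SS E 2 u - 3 * ss E u + dg E u) - (dg E v ^ 3 - (dg E v - 1) ^ 3))
   - ((3 * SS E 2 v - 3 * ss E v + dg E v) - (dg E u ^ 3 - (dg E u - 1) ^ 3))"
  using Pke[of 3] unfolding D3 .
lemma P4e: "M1pow 4 W E' = M1pow 4 V E - dg E u ^ 4 - dg E v ^ 4
   - ((4 * SS E 3 u - 6 * SS E 2 u + 4 * ss E u - dg E u) - (dg E v ^ 4 - (dg E v - 1) ^ 4))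
   - ((4 * SS E 3 v - 6 * SS E 2 v + 4 * ss E v - dg E v) - (dg E u ^ 4 - (dg E u - 1) ^ 4))"
  using Pke[of 4] unfolding D4 .
lemma Qe: "Qa 1 1 W E' = Qa 1 1 V E
   - dg E u * ss E u - dg E v * ss E v - dg E u * (ss E u - dg E v) - dg E v * (ss E v - dg E u)
   - 2 * ((s2 E u - ss E v - dg E u * (dg E u - 1)) + (s2 E v - ss E u - dg E v * (dg E v - 1)))"
  using Q11_del unfolding Qa_def s2_def by simp

end


lemma arc_m1: assumes gd: "good V E" and vu: "v \<in> nb E u"
  shows "real (card (del_verts_E E {u,v})) = ((1)) * (1) + ((1) * real (card E)) * (1) + ((-1)) * (dg E u) + ((-1)) * (dg E v)"
proof -
  have uv: "{u,v} \<in> E" using vu by (simp add: nb_def)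
  interpret ectx V E u v by (rule ectx.intro[OF gd uv])
  show ?thesis using card_del by simp
qed

lemma sum_m1: assumes gd: "good V E"
  shows "(\<Sum>e\<in>E. real (card (del_verts_E E e))) = (1/2) * (((1)) * (2 * real (card E)) + ((1) * real (card E)) * (2 * real (card E)) + ((-1)) * (M1pow 2 V E) + ((-1)) * (M1pow 2 V E))"
proof -
  have sg: "simple_graph V E" using gd good_def by blast
  have "(\<Sum>e\<in>E. real (card (del_verts_E E e))) = (1/2) * AS V E (\<lambda>u v. real (card (del_verts_E E {u,v})))" by (rule edge_sum[OF sg])
  also have "AS V E (\<lambda>u v. real (card (del_verts_E E {u,v}))) = AS V E (\<lambda>u v. ((1)) * (1) + ((1) * real (card E)) * (1) + ((-1)) * (dg E u) + ((-1)) * (dg E v))" by (rule AS_cong) (rule arc_m1[OF gd])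
  finally show ?thesis by (simp only: AS_add AS_diff AS_cmul atoms[OF sg])
qed

lemma arc_m2: assumes gd: "good V E" and vu: "v \<in> nb E u"
  shows "real (card (del_verts_E E {u,v})) ^ 2 = ((1)) * (1) + ((2) * real (card E)) * (1) + ((-2) * real (card E)) * (dg E u) + ((-2) * real (card E)) * (dg E v) + ((1) * real (card E) ^ 2) * (1) + ((-2)) * (dg E u) + ((2)) * (dg E u * dg E v) + ((1)) * (dg E u ^ 2) + ((-2)) * (dg E v) + ((1)) * (dg E v ^ 2)"
proof -
  have uv: "{u,v} \<in> E" using vu by (simp add: nb_def)
  interpret ectx V E u v by (rule ectx.intro[OF gd uv])
  show ?thesis unfolding card_del by algebra
qed

lemma sum_m2: assumes gd: "good V E"
  shows "(\<Sum>e\<in>E. real (card (del_verts_E E e)) ^ 2) = (1/2) * (((1)) * (2 * real (card E)) + ((2) * real (card E)) * (2 * real (card E)) + ((-2) * real (card E)) * (M1pow 2 V E) + ((-2) * real (card E)) * (M1pow 2 V E) + ((1) * real (card E) ^ 2) * (2 * real (card E)) + ((-2)) * (M1pow 2 V E) + ((2)) * (Qa 1 1 V E) + ((1)) * (M1pow 3 V E) + ((-2)) * (M1pow 2 V E) + ((1)) * (M1pow 3 V E))"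
proof -
  have sg: "simple_graph V E" using gd good_def by blast
  have "(\<Sum>e\<in>E. real (card (del_verts_E E e)) ^ 2) = (1/2) * AS V E (\<lambda>u v. real (card (del_verts_E E {u,v})) ^ 2)" by (rule edge_sum[OF sg])
  also have "AS V E (\<lambda>u v. real (card (del_verts_E E {u,v})) ^ 2) = AS V E (\<lambda>u v. ((1)) * (1) + ((2) * real (card E)) * (1) + ((-2) * real (card E)) * (dg E u) + ((-2) * real (card E)) * (dg E v) + ((1) * real (card E) ^ 2) * (1) + ((-2)) * (dg E u) + ((2)) * (dg E u * dg E v) + ((1)) * (dg E u ^ 2) + ((-2)) * (dg E v) + ((1)) * (dg E v ^ 2))" by (rule AS_cong) (rule arc_m2[OF gd])
  finally show ?thesis by (simp only: AS_add AS_diff AS_cmul atoms[OF sg])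
qed

lemma arc_m3: assumes gd: "good V E" and vu: "v \<in> nb E u"
  shows "real (card (del_verts_E E {u,v})) ^ 3 = ((1)) * (1) + ((3) * real (card E)) * (1) + ((-6) * real (card E)) * (dg E u) + ((6) * real (card E)) * (dg E u * dg E v) + ((3) * real (card E)) * (dg E u ^ 2) + ((-6) * real (card E)) * (dg E v) + ((3) * real (card E)) * (dg E v ^ 2) + ((3) * real (card E) ^ 2) * (1) + ((-3) * real (card E) ^ 2) * (dg E u) + ((-3) * real (card E) ^ 2) * (dg E v) + ((1) * real (card E) ^ 3) * (1) + ((-3)) * (dg E u) + ((6)) * (dg E u * dg E v) + ((-3)) * (dg E u * dg E v ^ 2) + ((3)) * (dg E u ^ 2) + ((-3)) * (dg E u ^ 2 * dg E v) + ((-1)) * (dg E u ^ 3) + ((-3)) * (dg E v) + ((3)) * (dg E v ^ 2) + ((-1)) * (dg E v ^ 3)"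
proof -
  have uv: "{u,v} \<in> E" using vu by (simp add: nb_def)
  interpret ectx V E u v by (rule ectx.intro[OF gd uv])
  show ?thesis unfolding card_del by algebra
qed

lemma sum_m3: assumes gd: "good V E"
  shows "(\<Sum>e\<in>E. real (card (del_verts_E E e)) ^ 3) = (1/2) * (((1)) * (2 * real (card E)) + ((3) * real (card E)) * (2 * real (card E)) + ((-6) * real (card E)) * (M1pow 2 V E) + ((6) * real (card E)) * (Qa 1 1 V E) + ((3) * real (card E)) * (M1pow 3 V E) + ((-6) * real (card E)) * (M1pow 2 V E) + ((3) * real (card E)) * (M1pow 3 V E) + ((3) * real (card E) ^ 2) * (2 * real (card E)) + ((-3) * real (card E) ^ 2) * (M1pow 2 V E) + ((-3) * real (card E) ^ 2) * (M1pow 2 V E) + ((1) * real (card E) ^ 3) * (2 * real (card E)) + ((-3)) * (M1pow 2 V E) + ((6)) * (Qa 1 1 V E) + ((-3)) * (Qa 2 1 V E) + ((3)) * (M1pow 3 V E) + ((-3)) * (Qa 2 1 V E) + ((-1)) * (M1pow 4 V E) + ((-3)) * (M1pow 2 V E) + ((3)) * (M1pow 3 V E) + ((-1)) * (M1pow 4 V E))"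
proof -
  have sg: "simple_graph V E" using gd good_def by blast
  have "(\<Sum>e\<in>E. real (card (del_verts_E E e)) ^ 3) = (1/2) * AS V E (\<lambda>u v. real (card (del_verts_E E {u,v})) ^ 3)" by (rule edge_sum[OF sg])
  also have "AS V E (\<lambda>u v. real (card (del_verts_E E {u,v})) ^ 3) = AS V E (\<lambda>u v. ((1)) * (1) + ((3) * real (card E)) * (1) + ((-6) * real (card E)) * (dg E u) + ((6) * real (card E)) * (dg E u * dg E v) + ((3) * real (card E)) * (dg E u ^ 2) + ((-6) * real (card E)) * (dg E v) + ((3) * real (card E)) * (dg E v ^ 2) + ((3) * real (card E) ^ 2) * (1) + ((-3) * real (card E) ^ 2) * (dg E u) + ((-3) * real (card E) ^ 2) * (dg E v) + ((1) * real (card E) ^ 3) * (1) + ((-3)) * (dg E u) + ((6)) * (dg E u * dg E v) + ((-3)) * (dg E u * dg E v ^ 2) + ((3)) * (dg E u ^ 2) + ((-3)) * (dg E u ^ 2 * dg E v) + ((-1)) * (dg E u ^ 3) + ((-3)) * (dg E v) + ((3)) * (dg E v ^ 2) + ((-1)) * (dg E v ^ 3))" by (rule AS_cong) (rule arc_m3[OF gd])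
  finally show ?thesis by (simp only: AS_add AS_diff AS_cmul atoms[OF sg])
qed

lemma arc_m4: assumes gd: "good V E" and vu: "v \<in> nb E u"
  shows "real (card (del_verts_E E {u,v})) ^ 4 = ((1)) * (1) + ((4) * real (card E)) * (1) + ((-12) * real (card E)) * (dg E u) + ((24) * real (card E)) * (dg E u * dg E v) + ((-12) * real (card E)) * (dg E u * dg E v ^ 2) + ((12) * real (card E)) * (dg E u ^ 2) + ((-12) * real (card E)) * (dg E u ^ 2 * dg E v) + ((-4) * real (card E)) * (dg E u ^ 3) + ((-12) * real (card E)) * (dg E v) + ((12) * real (card E)) * (dg E v ^ 2) + ((-4) * real (card E)) * (dg E v ^ 3) + ((6) * real (card E) ^ 2) * (1) + ((-12) * real (card E) ^ 2) * (dg E u) + ((12) * real (card E) ^ 2) * (dg E u * dg E v) + ((6) * real (card E) ^ 2) * (dg E u ^ 2) + ((-12) * real (card E) ^ 2) * (dg E v) + ((6) * real (card E) ^ 2) * (dg E v ^ 2) + ((4) * real (card E) ^ 3) * (1) + ((-4) * real (card E) ^ 3) * (dg E u) + ((-4) * real (card E) ^ 3) * (dg E v) + ((1) * real (card E) ^ 4) * (1) + ((-4)) * (dg E u) + ((12)) * (dg E u * dg E v) + ((-12)) * (dg E u * dg E v ^ 2) + ((4)) * (dg E u * dg E v ^ 3) + ((6)) * (dg E u ^ 2) + ((-12)) * (dg E u ^ 2 * dg E v) + ((6)) * (dg E u ^ 2 * dg E v ^ 2) + ((-4)) * (dg E u ^ 3) + ((4)) * (dg E u ^ 3 * dg E v)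 + ((1)) * (dg E u ^ 4) + ((-4)) * (dg E v) + ((6)) * (dg E v ^ 2) + ((-4)) * (dg E v ^ 3) + ((1)) * (dg E v ^ 4)"
proof -
  have uv: "{u,v} \<in> E" using vu by (simp add: nb_def)
  interpret ectx V E u v by (rule ectx.intro[OF gd uv])
  show ?thesis unfolding card_del by algebra
qed

lemma sum_m4: assumes gd: "good V E"
  shows "(\<Sum>e\<in>E. real (card (del_verts_E E e)) ^ 4) = (1/2) * (((1)) * (2 * real (card E)) + ((4) * real (card E)) * (2 * real (card E)) + ((-12) * real (card E)) * (M1pow 2 V E) + ((24) * real (card E)) * (Qa 1 1 V E) + ((-12) * real (card E)) * (Qa 2 1 V E) + ((12) * real (card E)) * (M1pow 3 V E) + ((-12) * real (card E)) * (Qa 2 1 V E) + ((-4) * real (card E)) * (M1pow 4 V E) + ((-12) * real (card E)) * (M1pow 2 V E) + ((12) * real (card E)) * (M1pow 3 V E) + ((-4) * real (card E)) * (M1pow 4 V E) + ((6) * real (card E) ^ 2) * (2 * real (card E)) + ((-12) * real (card E) ^ 2) * (M1pow 2 V E) + ((12) * real (card E) ^ 2) * (Qa 1 1 V E) + ((6) * real (card E) ^ 2) * (M1pow 3 V E) + ((-12) * real (card E) ^ 2) * (M1pow 2 V E) + ((6) * real (card E) ^ 2) * (M1pow 3 V E) + ((4) * real (card E) ^ 3) * (2 * real (card E)) + ((-4) * real (card E) ^ 3) * (M1pow 2 V E) + ((-4) * real (card E) ^ 3) * (M1pow 2 V E) + ((1) * real (card E) ^ 4) * (2 * real (card E)) +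 ((-4)) * (M1pow 2 V E) + ((12)) * (Qa 1 1 V E) + ((-12)) * (Qa 2 1 V E) + ((4)) * (Qa 3 1 V E) + ((6)) * (M1pow 3 V E) + ((-12)) * (Qa 2 1 V E) + ((6)) * (Qa 2 2 V E) + ((-4)) * (M1pow 4 V E) + ((4)) * (Qa 3 1 V E) + ((1)) * (M1pow 5 V E) + ((-4)) * (M1pow 2 V E) + ((6)) * (M1pow 3 V E) + ((-4)) * (M1pow 4 V E) + ((1)) * (M1pow 5 V E))"
proof -
  have sg: "simple_graph V E" using gd good_def by blast
  have "(\<Sum>e\<in>E. real (card (del_verts_E E e)) ^ 4) = (1/2) * AS V E (\<lambda>u v. real (card (del_verts_E E {u,v})) ^ 4)" by (rule edge_sum[OF sg])
  also have "AS V E (\<lambda>u v. real (card (del_verts_E E {u,v})) ^ 4) = AS V E (\<lambda>u v. ((1)) * (1) + ((4) * real (card E)) * (1) + ((-12) * real (card E)) * (dg E u) + ((24) * real (card E)) * (dg E u * dg E v) + ((-12) * real (card E)) * (dg E u * dg E v ^ 2) + ((12) * real (card E)) * (dg E u ^ 2) + ((-12) * real (card E)) * (dg E u ^ 2 * dg E v) + ((-4) * real (card E)) * (dg E u ^ 3) + ((-12) * real (card E)) * (dg E v) + ((12) * real (card E)) * (dg E v ^ 2) + ((-4) * real (card E)) * (dg E v ^ 3) + ((6) * real (card E) ^ 2) * (1) + ((-12) * real (card E) ^ 2) * (dg E u) + ((12) * real (card E) ^ 2) * (dg E u * dg E v) + ((6) * real (card E) ^ 2) * (dg E u ^ 2)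 + ((-12) * real (card E) ^ 2) * (dg E v) + ((6) * real (card E) ^ 2) * (dg E v ^ 2) + ((4) * real (card E) ^ 3) * (1) + ((-4) * real (card E) ^ 3) * (dg E u) + ((-4) * real (card E) ^ 3) * (dg E v) + ((1) * real (card E) ^ 4) * (1) + ((-4)) * (dg E u) + ((12)) * (dg E u * dg E v) + ((-12)) * (dg E u * dg E v ^ 2) + ((4)) * (dg E u * dg E v ^ 3) + ((6)) * (dg E u ^ 2) + ((-12)) * (dg E u ^ 2 * dg E v) + ((6)) * (dg E u ^ 2 * dg E v ^ 2) + ((-4)) * (dg E u ^ 3) + ((4)) * (dg E u ^ 3 * dg E v) + ((1)) * (dg E u ^ 4) + ((-4)) * (dg E v) + ((6)) * (dg E v ^ 2) + ((-4)) * (dg E v ^ 3) + ((1)) * (dg E v ^ 4))" by (rule AS_cong) (rule arc_m4[OF gd])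
  finally show ?thesis by (simp only: AS_add AS_diff AS_cmul atoms[OF sg])
qed

lemma arc_P2: assumes gd: "good V E" and vu: "v \<in> nb E u"
  shows "M1pow 2 (V - {u,v}) (del_verts_E E {u,v}) = ((-2)) * (1) + ((1) * M1pow 2 V E) * (1) + ((3)) * (dg E u) + ((-1)) * (dg E u ^ 2) + ((3)) * (dg E v) + ((-1)) * (dg E v ^ 2) + ((-2)) * (ss E u) + ((-2)) * (ss E v)"
proof -
  have uv: "{u,v} \<in> E" using vu by (simp add: nb_def)
  interpret ectx V E u v by (rule ectx.intro[OF gd uv])
  show ?thesis unfolding P2e by algebra
qed

lemma sum_P2: assumes gd: "good V E"
  shows "(\<Sum>e\<in>E. M1pow 2 (V - e) (del_verts_E E e)) = (1/2) * (((-2)) * (2 * real (card E)) + ((1) * M1pow 2 V E) * (2 * real (card E)) + ((3)) * (M1pow 2 V E) + ((-1)) * (M1pow 3 V E) + ((3)) * (M1pow 2 V E) + ((-1)) * (M1pow 3 V E) + ((-2)) * (Qa 1 1 V E) + ((-2)) * (Qa 1 1 V E))"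
proof -
  have sg: "simple_graph V E" using gd good_def by blast
  have "(\<Sum>e\<in>E. M1pow 2 (V - e) (del_verts_E E e)) = (1/2) * AS V E (\<lambda>u v. M1pow 2 (V - {u,v}) (del_verts_E E {u,v}))" by (rule edge_sum[OF sg])
  also have "AS V E (\<lambda>u v. M1pow 2 (V - {u,v}) (del_verts_E E {u,v})) = AS V E (\<lambda>u v. ((-2)) * (1) + ((1) * M1pow 2 V E) * (1) + ((3)) * (dg E u) + ((-1)) * (dg E u ^ 2) + ((3)) * (dg E v) + ((-1)) * (dg E v ^ 2) + ((-2)) * (ss E u) + ((-2)) * (ss E v))" by (rule AS_cong) (rule arc_P2[OF gd])
  finally show ?thesis by (simp only: AS_add AS_diff AS_cmul atoms[OF sg])
qed

lemma arc_P3: assumes gd: "good V E" and vu: "v \<in> nb E u"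
  shows "M1pow 3 (V - {u,v}) (del_verts_E E {u,v}) = ((2)) * (1) + ((1) * M1pow 3 V E) * (1) + ((-3)) * (SS E 2 u) + ((-3)) * (SS E 2 v) + ((-4)) * (dg E u) + ((3)) * (dg E u ^ 2) + ((-1)) * (dg E u ^ 3) + ((-4)) * (dg E v) + ((3)) * (dg E v ^ 2) + ((-1)) * (dg E v ^ 3) + ((3)) * (ss E u) + ((3)) * (ss E v)"
proof -
  have uv: "{u,v} \<in> E" using vu by (simp add: nb_def)
  interpret ectx V E u v by (rule ectx.intro[OF gd uv])
  show ?thesis unfolding P3e by algebra
qed

lemma sum_P3: assumes gd: "good V E"
  shows "(\<Sum>e\<in>E. M1pow 3 (V - e) (del_verts_E E e)) = (1/2) * (((2)) * (2 * real (card E)) + ((1) * M1pow 3 V E) * (2 * real (card E)) + ((-3)) * (Qa 2 1 V E) + ((-3)) * (Qa 2 1 V E) + ((-4)) * (M1pow 2 V E) + ((3)) * (M1pow 3 V E) + ((-1)) * (M1pow 4 V E) + ((-4)) * (M1pow 2 V E) + ((3)) * (M1pow 3 V E) + ((-1)) * (M1pow 4 V E) + ((3)) * (Qa 1 1 V E) + ((3)) * (Qa 1 1 V E))"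
proof -
  have sg: "simple_graph V E" using gd good_def by blast
  have "(\<Sum>e\<in>E. M1pow 3 (V - e) (del_verts_E E e)) = (1/2) * AS V E (\<lambda>u v. M1pow 3 (V - {u,v}) (del_verts_E E {u,v}))" by (rule edge_sum[OF sg])
  also have "AS V E (\<lambda>u v. M1pow 3 (V - {u,v}) (del_verts_E E {u,v})) = AS V E (\<lambda>u v. ((2)) * (1) + ((1) * M1pow 3 V E) * (1) + ((-3)) * (SS E 2 u) + ((-3)) * (SS E 2 v) + ((-4)) * (dg E u) + ((3)) * (dg E u ^ 2) + ((-1)) * (dg E u ^ 3) + ((-4)) * (dg E v) + ((3)) * (dg E v ^ 2) + ((-1)) * (dg E v ^ 3) + ((3)) * (ss E u) + ((3)) * (ss E v))" by (rule AS_cong) (rule arc_P3[OF gd])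
  finally show ?thesis by (simp only: AS_add AS_diff AS_cmul atoms[OF sg])
qed

lemma arc_P4: assumes gd: "good V E" and vu: "v \<in> nb E u"
  shows "M1pow 4 (V - {u,v}) (del_verts_E E {u,v}) = ((-2)) * (1) + ((1) * M1pow 4 V E) * (1) + ((6)) * (SS E 2 u) + ((6)) * (SS E 2 v) + ((-4)) * (SS E 3 u) + ((-4)) * (SS E 3 v) + ((5)) * (dg E u) + ((-6)) * (dg E u ^ 2) + ((4)) * (dg E u ^ 3) + ((-1)) * (dg E u ^ 4) + ((5)) * (dg E v) + ((-6)) * (dg E v ^ 2) + ((4)) * (dg E v ^ 3) + ((-1)) * (dg E v ^ 4) + ((-4)) * (ss E u) + ((-4)) * (ss E v)"
proof -
  have uv: "{u,v} \<in> E" using vu by (simp add: nb_def)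
  interpret ectx V E u v by (rule ectx.intro[OF gd uv])
  show ?thesis unfolding P4e by algebra
qed

lemma sum_P4: assumes gd: "good V E"
  shows "(\<Sum>e\<in>E. M1pow 4 (V - e) (del_verts_E E e)) = (1/2) * (((-2)) * (2 * real (card E)) + ((1) * M1pow 4 V E) * (2 * real (card E)) + ((6)) * (Qa 2 1 V E) + ((6)) * (Qa 2 1 V E) + ((-4)) * (Qa 3 1 V E) + ((-4)) * (Qa 3 1 V E) + ((5)) * (M1pow 2 V E) + ((-6)) * (M1pow 3 V E) + ((4)) * (M1pow 4 V E) + ((-1)) * (M1pow 5 V E) + ((5)) * (M1pow 2 V E) + ((-6)) * (M1pow 3 V E) + ((4)) * (M1pow 4 V E) + ((-1)) * (M1pow 5 V E) + ((-4)) * (Qa 1 1 V E) + ((-4)) * (Qa 1 1 V E))"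
proof -
  have sg: "simple_graph V E" using gd good_def by blast
  have "(\<Sum>e\<in>E. M1pow 4 (V - e) (del_verts_E E e)) = (1/2) * AS V E (\<lambda>u v. M1pow 4 (V - {u,v}) (del_verts_E E {u,v}))" by (rule edge_sum[OF sg])
  also have "AS V E (\<lambda>u v. M1pow 4 (V - {u,v}) (del_verts_E E {u,v})) = AS V E (\<lambda>u v. ((-2)) * (1) + ((1) * M1pow 4 V E) * (1) + ((6)) * (SS E 2 u) + ((6)) * (SS E 2 v) + ((-4)) * (SS E 3 u) + ((-4)) * (SS E 3 v) + ((5)) * (dg E u) + ((-6)) * (dg E u ^ 2) + ((4)) * (dg E u ^ 3) + ((-1)) * (dg E u ^ 4) + ((5)) * (dg E v) + ((-6)) * (dg E v ^ 2) + ((4)) * (dg E v ^ 3) + ((-1)) * (dg E v ^ 4) + ((-4)) * (ss E u) + ((-4)) * (ss E v))" by (rule AS_cong) (rule arc_P4[OF gd])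
  finally show ?thesis by (simp only: AS_add AS_diff AS_cmul atoms[OF sg])
qed

lemma arc_Q: assumes gd: "good V E" and vu: "v \<in> nb E u"
  shows "Qa 1 1 (V - {u,v}) (del_verts_E E {u,v}) = ((1) * Qa 1 1 V E) * (1) + ((-2)) * (dg E u) + ((2)) * (dg E u * dg E v) + ((-2)) * (dg E u * ss E u) + ((2)) * (dg E u ^ 2) + ((-2)) * (dg E v) + ((-2)) * (dg E v * ss E v) + ((2)) * (dg E v ^ 2) + ((-2)) * (s2 E u) + ((-2)) * (s2 E v) + ((2)) * (ss E u) + ((2)) * (ss E v)"
proof -
  have uv: "{u,v} \<in> E" using vu by (simp add: nb_def)
  interpret ectx V E u v by (rule ectx.intro[OF gd uv])
  show ?thesis unfolding Qe by algebra
qed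

lemma sum_Q: assumes gd: "good V E"
  shows "(\<Sum>e\<in>E. Qa 1 1 (V - e) (del_verts_E E e)) = (1/2) * (((1) * Qa 1 1 V E) * (2 * real (card E)) + ((-2)) * (M1pow 2 V E) + ((2)) * (Qa 1 1 V E) + ((-2)) * (Qa 2 1 V E) + ((2)) * (M1pow 3 V E) + ((-2)) * (M1pow 2 V E) + ((-2)) * (Qa 2 1 V E) + ((2)) * (M1pow 3 V E) + ((-2)) * (Ra V E) + ((-2)) * (Ra V E) + ((2)) * (Qa 1 1 V E) + ((2)) * (Qa 1 1 V E))"
proof -
  have sg: "simple_graph V E" using gd good_def by blast
  have "(\<Sum>e\<in>E. Qa 1 1 (V - e) (del_verts_E E e)) = (1/2) * AS V E (\<lambda>u v. Qa 1 1 (V - {u,v}) (del_verts_E E {u,v}))" by (rule edge_sum[OF sg])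
  also have "AS V E (\<lambda>u v. Qa 1 1 (V - {u,v}) (del_verts_E E {u,v})) = AS V E (\<lambda>u v. ((1) * Qa 1 1 V E) * (1) + ((-2)) * (dg E u) + ((2)) * (dg E u * dg E v) + ((-2)) * (dg E u * ss E u) + ((2)) * (dg E u ^ 2) + ((-2)) * (dg E v) + ((-2)) * (dg E v * ss E v) + ((2)) * (dg E v ^ 2) + ((-2)) * (s2 E u) + ((-2)) * (s2 E v) + ((2)) * (ss E u) + ((2)) * (ss E v))" by (rule AS_cong) (rule arc_Q[OF gd])
  finally show ?thesis by (simp only: AS_add AS_diff AS_cmul atoms[OF sg])
qed

lemma arc_MP: assumes gd: "good V E" and vu: "v \<in> nb E u"
  shows "real (card (del_verts_E E {u,v})) * M1pow 2 (V - {u,v}) (del_verts_E E {u,v}) = ((-2)) * (1) + ((-2) * real (card E)) * (1) + ((1) * real (card E) * M1pow 2 V E) * (1) + ((3) * real (card E)) * (dg E u) + ((-1) * real (card E)) * (dg E u ^ 2) + ((3) * real (card E)) * (dg E v) + ((-1) * real (card E)) * (dg E v ^ 2) + ((-2) * real (card E)) * (ss E u) + ((-2) * real (card E)) * (ss E v) + ((1) * M1pow 2 V E) * (1) + ((-1) * M1pow 2 V E) * (dg E u) + ((-1) * M1pow 2 V E) * (dg E v) + ((5)) * (dg E u) + ((-6)) * (dg E u * dg E v) + ((1)) * (dg E u * dg E v ^ 2) + ((2)) * (dg E u * ss E u) + ((2)) * (dg E u * ss E v) + ((-4)) * (dg E u ^ 2) + ((1)) * (dg E u ^ 2 * dg E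 v) + ((1)) * (dg E u ^ 3) + ((5)) * (dg E v) + ((2)) * (dg E v * ss E u) + ((2)) * (dg E v * ss E v) + ((-4)) * (dg E v ^ 2) + ((1)) * (dg E v ^ 3) + ((-2)) * (ss E u) + ((-2)) * (ss E v)"
proof -
  have uv: "{u,v} \<in> E" using vu by (simp add: nb_def)
  interpret ectx V E u v by (rule ectx.intro[OF gd uv])
  show ?thesis unfolding card_del P2e by algebra
qed

lemma sum_MP: assumes gd: "good V E"
  shows "(\<Sum>e\<in>E. real (card (del_verts_E E e)) * M1pow 2 (V - e) (del_verts_E E e)) = (1/2) * (((-2)) * (2 * real (card E)) + ((-2) * real (card E)) * (2 * real (card E)) + ((1) * real (card E) * M1pow 2 V E) * (2 * real (card E)) + ((3) * real (card E)) * (M1pow 2 V E) + ((-1) * real (card E)) * (M1pow 3 V E) + ((3) * real (card E)) * (M1pow 2 V E) + ((-1) * real (card E)) * (M1pow 3 V E) + ((-2) * real (card E)) * (Qa 1 1 V E) + ((-2) * real (card E)) * (Qa 1 1 V E) + ((1) * M1pow 2 V E) * (2 * real (card E)) + ((-1) * M1pow 2 V E) * (M1pow 2 V E) + ((-1) * M1pow 2 V E) * (M1pow 2 V E) + ((5)) * (M1pow 2 V E) + ((-6)) * (Qa 1 1 V E) + ((1)) * (Qa 2 1 V E) + ((2)) * (Qa 2 1 V E) + ((2)) * (Ra V E) + ((-4)) * (M1pow 3 V E) + ((1)) * (Qa 2 1 V E) + ((1)) * (M1pow 4 V E) + ((5)) * (M1pow 2 V E) + ((2)) * (Ra V E) +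 ((2)) * (Qa 2 1 V E) + ((-4)) * (M1pow 3 V E) + ((1)) * (M1pow 4 V E) + ((-2)) * (Qa 1 1 V E) + ((-2)) * (Qa 1 1 V E))"
proof -
  have sg: "simple_graph V E" using gd good_def by blast
  have "(\<Sum>e\<in>E. real (card (del_verts_E E e)) * M1pow 2 (V - e) (del_verts_E E e)) = (1/2) * AS V E (\<lambda>u v. real (card (del_verts_E E {u,v})) * M1pow 2 (V - {u,v}) (del_verts_E E {u,v}))" by (rule edge_sum[OF sg])
  also have "AS V E (\<lambda>u v. real (card (del_verts_E E {u,v})) * M1pow 2 (V - {u,v}) (del_verts_E E {u,v})) = AS V E (\<lambda>u v. ((-2)) * (1) + ((-2) * real (card E)) * (1) + ((1) * real (card E) * M1pow 2 V E) * (1) + ((3) * real (card E)) * (dg E u) + ((-1) * real (card E)) * (dg E u ^ 2) + ((3) * real (card E)) * (dg E v) + ((-1) * real (card E)) * (dg E v ^ 2) + ((-2) * real (card E)) * (ss E u) + ((-2) * real (card E)) * (ss E v) + ((1) * M1pow 2 V E) * (1) + ((-1) * M1pow 2 V E) * (dg E u) + ((-1) * M1pow 2 V E) * (dg E v) + ((5)) * (dg E u) + ((-6)) * (dg E u * dg E v) + ((1)) * (dg E u * dg E v ^ 2) + ((2)) * (dg E u * ss E u) + ((2)) * (dg E u * ss E v) + ((-4)) * (dg E u ^ 2) + ((1)) * (dg E u ^ 2 * dg E v) + ((1)) * (dg E u ^ 3) + ((5)) * (dg E v) + ((2)) * (dg E v * ss E u) + ((2)) * (dg E v * ss E v) + ((-4))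 * (dg E v ^ 2) + ((1)) * (dg E v ^ 3) + ((-2)) * (ss E u) + ((-2)) * (ss E v))" by (rule AS_cong) (rule arc_MP[OF gd])
  finally show ?thesis by (simp only: AS_add AS_diff AS_cmul atoms[OF sg])
qed


lemma sg_ne: "simple_graph V E \<Longrightarrow> {} \<notin> E"
proof
  assume sg: "simple_graph V E" and e: "{} \<in> E"
  show False using sg_edge[OF sg e] by auto
qed

lemma good_sg: "good V E \<Longrightarrow> simple_graph V E" unfolding good_def by blast

lemma rec_good: "good V E \<Longrightarrow> real (Suc j) * real (num_matchings E (Suc j)) = (\<Sum>e\<in>E. real (num_matchings (del_verts_E E e) j))"
  by (rule MS_rec[OF sg_finiteE[OF good_sg] sg_ne[OF good_sg]])

lemma p1: "good V E \<Longrightarrow> real (num_matchings E 1) = real (card E)"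
proof -
  assume gd: "good V E"
  have "real (Suc 0) * real (num_matchings E (Suc 0)) = (\<Sum>e\<in>E. real (num_matchings (del_verts_E E e) 0))"
    by (rule rec_good[OF gd])
  also have "\<dots> = (\<Sum>e\<in>E. 1)"
  proof (rule sum.cong[OF refl])
    fix e assume "e \<in> E"
    have "finite (del_verts_E E e)" using sg_finiteE[OF good_sg[OF gd]] del_sub finite_subset by metis
    then show "real (num_matchings (del_verts_E E e) 0) = 1" using MS_zero by simp
  qed
  finally show ?thesis by simp
qed

lemma p2: "good V E \<Longrightarrow> real (num_matchings E 2) = (real (card E) ^ 2 + real (card E) - M1pow 2 V E) / 2"
proof -
  assume gd: "good V E"
  have "real (Suc 1) * real (num_matchings E (Suc 1)) = (\<Sum>e\<in>E. real (num_matchings (del_verts_E E e) 1))"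
    by (rule rec_good[OF gd])
  also have "\<dots> = (\<Sum>e\<in>E. real (card (del_verts_E E e)))"
  proof (rule sum.cong[OF refl])
    fix e assume "e \<in> E"
    show "real (num_matchings (del_verts_E E e) 1) = real (card (del_verts_E E e))" by (rule p1[OF del_good[OF gd]])
  qed
  finally show ?thesis unfolding sum_m1[OF gd] by (simp add: algebra_simps power2_eq_square numeral_2_eq_2)
qed

lemma p3: "good V E \<Longrightarrow> real (num_matchings E 3) = (1/6) * (real (card E) ^ 3 + 3 * real (card E) ^ 2 + 4 * real (card E)
   - (3 * real (card E) + 6) * M1pow 2 V E + 2 * M1pow 3 V E + 3 * Qa 1 1 V E)"
proof -
  assume gd: "good V E"
  have "real (Suc 2) * real (num_matchings E (Suc 2)) = (\<Sum>e\<in>E. real (num_matchings (del_verts_E E e) 2))"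
    by (rule rec_good[OF gd])
  also have "\<dots> = (\<Sum>e\<in>E. (real (card (del_verts_E E e)) ^ 2 + real (card (del_verts_E E e)) - M1pow 2 (V - e) (del_verts_E E e)) / 2)"
  proof (rule sum.cong[OF refl])
    fix e assume "e \<in> E"
    show "real (num_matchings (del_verts_E E e) 2) = (real (card (del_verts_E E e)) ^ 2 + real (card (del_verts_E E e)) - M1pow 2 (V - e) (del_verts_E E e)) / 2" by (rule p2[OF del_good[OF gd]])
  qed
  also have "\<dots> = ((\<Sum>e\<in>E. real (card (del_verts_E E e)) ^ 2) + (\<Sum>e\<in>E. real (card (del_verts_E E e)))
     - (\<Sum>e\<in>E. M1pow 2 (V - e) (del_verts_E E e))) / 2"
    by (simp only: sum_divide_distrib[symmetric] sum.distrib sum_subtractf)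
  finally have "real (num_matchings E 3) = (\<dots>) / 3" by (simp add: numeral_3_eq_3)
  then show ?thesis unfolding sum_m1[OF gd] sum_m2[OF gd] sum_P2[OF gd]
    by (simp add: algebra_simps power2_eq_square power3_eq_cube)
qed

definition P4form :: "'a set \<Rightarrow> 'a set set \<Rightarrow> real" where
  "P4form V E = real (card E) ^ 4 / 24 + real (card E) ^ 3 / 4 + 19 * real (card E) ^ 2 / 24 + 5 * real (card E) / 4 - real (card E) ^ 2 * M1pow 2 V E / 4 - 5 * real (card E) * M1pow 2 V E / 4 - 5 * M1pow 2 V E / 2 + M1pow 2 V E ^ 2 / 8 + real (card E) * M1pow 3 V E / 3 + 3 * M1pow 3 V E / 2 - M1pow 4 V E / 4 + 2 * Qa 1 1 V E + real (card E) * Qa 1 1 V E / 2 - Qa 2 1 V E - Ra V E / 2"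

lemma p4: "good V E \<Longrightarrow> real (num_matchings E 4) = P4form V E"
proof -
  assume gd: "good V E"
  have "real (Suc 3) * real (num_matchings E (Suc 3)) = (\<Sum>e\<in>E. real (num_matchings (del_verts_E E e) 3))"
    by (rule rec_good[OF gd])
  also have "\<dots> = (\<Sum>e\<in>E. (1/6) * real (card (del_verts_E E e)) ^ 3 + (1/2) * real (card (del_verts_E E e)) ^ 2 + (2/3) * real (card (del_verts_E E e)) - (1/2) * (real (card (del_verts_E E e)) * M1pow 2 (V - e) (del_verts_E E e)) - 1 * M1pow 2 (V - e) (del_verts_E E e) + (1/3) * M1pow 3 (V - e) (del_verts_E E e) + (1/2) * Qa 1 1 (V - e) (del_verts_E E e))"
  proof (rule sum.cong[OF refl])
    fix e assume "e \<in> E"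
    have "real (num_matchings (del_verts_E E e) 3) = (1/6) * (real (card (del_verts_E E e)) ^ 3 + 3 * real (card (del_verts_E E e)) ^ 2 + 4 * real (card (del_verts_E E e)) - (3 * real (card (del_verts_E E e)) + 6) * M1pow 2 (V - e) (del_verts_E E e) + 2 * M1pow 3 (V - e) (del_verts_E E e) + 3 * Qa 1 1 (V - e) (del_verts_E E e))" by (rule p3[OF del_good[OF gd]])
    then show "real (num_matchings (del_verts_E E e) 3) = (1/6) * real (card (del_verts_E E e)) ^ 3 + (1/2) * real (card (del_verts_E E e)) ^ 2 + (2/3) * real (card (del_verts_E E e)) - (1/2) * (real (card (del_verts_E E e)) * M1pow 2 (V - e) (del_verts_E E e)) - 1 * M1pow 2 (V - e) (del_verts_E E e) + (1/3) * M1pow 3 (V - e) (del_verts_E E e) + (1/2) * Qa 1 1 (V - e) (del_verts_E E e)" by (simp add: algebra_simps)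
  qed
  also have "\<dots> = (1/6) * (\<Sum>e\<in>E. real (card (del_verts_E E e)) ^ 3) + (1/2) * (\<Sum>e\<in>E. real (card (del_verts_E E e)) ^ 2) + (2/3) * (\<Sum>e\<in>E. real (card (del_verts_E E e))) - (1/2) * (\<Sum>e\<in>E. real (card (del_verts_E E e)) * M1pow 2 (V - e) (del_verts_E E e)) - 1 * (\<Sum>e\<in>E. M1pow 2 (V - e) (del_verts_E E e)) + (1/3) * (\<Sum>e\<in>E. M1pow 3 (V - e) (del_verts_E E e)) + (1/2) * (\<Sum>e\<in>E. Qa 1 1 (V - e) (del_verts_E E e))"
    by (simp only: sum.distrib sum_subtractf sum_distrib_left[symmetric])
  finally have "real (num_matchings E 4) = ((1/6) * (\<Sum>e\<in>E. real (card (del_verts_E E e)) ^ 3) + (1/2) * (\<Sum>e\<in>E. real (card (del_verts_E E e)) ^ 2) + (2/3) * (\<Sum>e\<in>E. real (card (del_verts_E E e))) - (1/2) * (\<Sum>e\<in>E. real (card (del_verts_E E e)) * M1pow 2 (V - e) (del_verts_E E e)) - 1 * (\<Sum>e\<in>E. M1pow 2 (V - e) (del_verts_E E e)) + (1/3) * (\<Sum>e\<in>E. M1pow 3 (V - e) (del_verts_E E e)) + (1/2) * (\<Sum>e\<in>E. Qa 1 1 (V - e) (del_verts_E E e))) / 4" by (simp add: eval_nat_numeral)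
  then show ?thesis unfolding sum_m1[OF gd] sum_m2[OF gd] sum_m3[OF gd] sum_MP[OF gd] sum_P2[OF gd] sum_P3[OF gd] sum_Q[OF gd] P4form_def
    by (simp add: algebra_simps power2_eq_square power3_eq_cube eval_nat_numeral)
qed


context fixes V :: "'a set" and E :: "'a set set" assumes sg: "simple_graph V E"
begin

lemma prod2: "y \<in> nb E x \<Longrightarrow> (\<Prod>z\<in>{x,y}. f z) = f x * (f y :: real)"
proof -
  assume "y \<in> nb E x" then have "x \<noteq> y" using nb_irr[OF sg, of x] by auto
  then show ?thesis by simp
qed
lemma sum2: "y \<in> nb E x \<Longrightarrow> (\<Sum>z\<in>{x,y}. f z) = f x + (f y :: real)"
proof -
  assume "y \<in> nb E x" then have "x \<noteq> y" using nb_irr[OF sg, of x] by auto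
  then show ?thesis by simp
qed

lemma M2_conv: "M2 E = Qa 1 1 V E / 2"
proof -
  have "M2 E = (1/2) * AS V E (\<lambda>x y. \<Prod>z\<in>{x,y}. real (deg E z))" unfolding M2_def by (rule edge_sum[OF sg])
  also have "AS V E (\<lambda>x y. \<Prod>z\<in>{x,y}. real (deg E z)) = AS V E (\<lambda>x y. dg E x * dg E y)"
    by (rule AS_cong) (simp add: prod2 dg_def)
  finally show ?thesis unfolding atQ11[OF sg] by simp
qed

lemma M2sq_conv: "M2sq E = Qa 2 2 V E / 2"
proof -
  have "M2sq E = (1/2) * AS V E (\<lambda>x y. \<Prod>z\<in>{x,y}. real (deg E z) ^ 2)" unfolding M2sq_def by (rule edge_sum[OF sg])
  also have "AS V E (\<lambda>x y. \<Prod>z\<in>{x,y}. real (deg E z) ^ 2) = AS V E (\<lambda>x y. dg E x ^ 2 * dg E y ^ 2)"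
    by (rule AS_cong) (simp add: prod2 dg_def)
  finally show ?thesis unfolding atQ22[OF sg] by simp
qed

lemma alpha1_conv: "alpha_lam 1 E = Qa 2 1 V E"
proof -
  have "alpha_lam 1 E = (1/2) * AS V E (\<lambda>x y. (\<Prod>z\<in>{x,y}. real (deg E z)) * (\<Sum>z\<in>{x,y}. real (deg E z) ^ 1))"
    unfolding alpha_lam_def by (rule edge_sum[OF sg])
  also have "AS V E (\<lambda>x y. (\<Prod>z\<in>{x,y}. real (deg E z)) * (\<Sum>z\<in>{x,y}. real (deg E z) ^ 1))
     = AS V E (\<lambda>x y. dg E x ^ 2 * dg E y + dg E x * dg E y ^ 2)"
    by (rule AS_cong) (simp add: prod2 sum2 dg_def algebra_simps power2_eq_square)
  finally show ?thesis unfolding AS_add atQ21[OF sg] atQ12[OF sg] by simp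
qed

lemma alpha2_conv: "alpha_lam 2 E = Qa 3 1 V E"
proof -
  have "alpha_lam 2 E = (1/2) * AS V E (\<lambda>x y. (\<Prod>z\<in>{x,y}. real (deg E z)) * (\<Sum>z\<in>{x,y}. real (deg E z) ^ 2))"
    unfolding alpha_lam_def by (rule edge_sum[OF sg])
  also have "AS V E (\<lambda>x y. (\<Prod>z\<in>{x,y}. real (deg E z)) * (\<Sum>z\<in>{x,y}. real (deg E z) ^ 2))
     = AS V E (\<lambda>x y. dg E x ^ 3 * dg E y + dg E x * dg E y ^ 3)"
    by (rule AS_cong) (simp add: prod2 sum2 dg_def algebra_simps power2_eq_square power3_eq_cube)
  finally show ?thesis unfolding AS_add atQ31[OF sg] atQ13[OF sg] by simp
qed

lemma adj_sg: "simple_graph E (adj_pairs E)"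
  unfolding simple_graph_def adj_pairs_def using sg_finiteE[OF sg] by blast

lemma nb_adj: "e \<in> E \<Longrightarrow> nb (adj_pairs E) e = {f\<in>E. f \<noteq> e \<and> e \<inter> f \<noteq> {}}"
  unfolding nb_def adj_pairs_def by (auto simp: doubleton_eq_iff Int_commute)

lemma nbA_split: assumes y: "y \<in> nb E x"
  shows "{f\<in>E. f \<noteq> {x,y} \<and> {x,y} \<inter> f \<noteq> {}} = (\<lambda>z. {x,z}) ` (nb E x - {y}) \<union> (\<lambda>z. {y,z}) ` (nb E y - {x})"
proof
  show "{f\<in>E. f \<noteq> {x,y} \<and> {x,y} \<inter> f \<noteq> {}} \<subseteq> (\<lambda>z. {x,z}) ` (nb E x - {y}) \<union> (\<lambda>z. {y,z}) ` (nb E y - {x})"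
  proof
    fix f assume f: "f \<in> {f\<in>E. f \<noteq> {x,y} \<and> {x,y} \<inter> f \<noteq> {}}"
    then obtain p q where pq: "p \<noteq> q" "f = {p,q}" "f \<in> E" using sg_edge[OF sg] by blast
    have "p \<in> {x,y} \<or> q \<in> {x,y}" using f pq by auto
    moreover have "{p,q} \<noteq> {x,y}" using f pq by auto
    ultimately show "f \<in> (\<lambda>z. {x,z}) ` (nb E x - {y}) \<union> (\<lambda>z. {y,z}) ` (nb E y - {x})"
      using pq unfolding nb_def by (auto simp: insert_commute)
  qed
  show "(\<lambda>z. {x,z}) ` (nb E x - {y}) \<union> (\<lambda>z. {y,z}) ` (nb E y - {x}) \<subseteq> {f\<in>E. f \<noteq> {x,y} \<and> {x,y} \<inter> f \<noteq> {}}"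
    unfolding nb_def by (auto simp: doubleton_eq_iff)
qed

lemma adj_sum: "(\<Sum>P\<in>adj_pairs E. F P) = (1/2) * AS V E (\<lambda>x y. \<Sum>z\<in>nb E x - {y}. F {{x,y},{x,z}})"
proof -
  have "(\<Sum>P\<in>adj_pairs E. F P) = (1/2) * AS E (adj_pairs E) (\<lambda>e f. F {e,f})"
    by (rule edge_sum[OF adj_sg])
  also have "AS E (adj_pairs E) (\<lambda>e f. F {e,f}) = (\<Sum>e\<in>E. \<Sum>f\<in>{f\<in>E. f \<noteq> e \<and> e \<inter> f \<noteq> {}}. F {e,f})"
    unfolding AS_def by (intro sum.cong refl) (simp add: nb_adj)
  also have "\<dots> = (1/2) * AS V E (\<lambda>x y. \<Sum>f\<in>{f\<in>E. f \<noteq> {x,y} \<and> {x,y} \<inter> f \<noteq> {}}. F {{x,y},f})"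
    by (rule edge_sum[OF sg])
  also have "AS V E (\<lambda>x y. \<Sum>f\<in>{f\<in>E. f \<noteq> {x,y} \<and> {x,y} \<inter> f \<noteq> {}}. F {{x,y},f})
     = AS V E (\<lambda>x y. (\<Sum>z\<in>nb E x - {y}. F {{x,y},{x,z}}) + (\<Sum>z\<in>nb E y - {x}. F {{x,y},{y,z}}))"
  proof (rule AS_cong)
    fix x y assume y: "y \<in> nb E x"
    have i1: "inj_on (\<lambda>z. {x,z}) (nb E x - {y})" by (auto simp: inj_on_def doubleton_eq_iff)
    have i2: "inj_on (\<lambda>z. {y,z}) (nb E y - {x})" by (auto simp: inj_on_def doubleton_eq_iff)
    have d: "(\<lambda>z. {x,z}) ` (nb E x - {y}) \<inter> (\<lambda>z. {y,z}) ` (nb E y - {x}) = {}"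
      using y nb_irr[OF sg, of x] by (auto simp: doubleton_eq_iff)
    have f1: "finite ((\<lambda>z. {x,z}) ` (nb E x - {y}))" "finite ((\<lambda>z. {y,z}) ` (nb E y - {x}))"
      using nb_fin[OF sg] by auto
    show "(\<Sum>f\<in>{f\<in>E. f \<noteq> {x,y} \<and> {x,y} \<inter> f \<noteq> {}}. F {{x,y},f})
       = (\<Sum>z\<in>nb E x - {y}. F {{x,y},{x,z}}) + (\<Sum>z\<in>nb E y - {x}. F {{x,y},{y,z}})"
      unfolding nbA_split[OF y] sum.union_disjoint[OF f1 d] sum.reindex[OF i1] sum.reindex[OF i2] by simp
  qed
  also have "\<dots> = AS V E (\<lambda>x y. \<Sum>z\<in>nb E x - {y}. F {{x,y},{x,z}}) + AS V E (\<lambda>x y. \<Sum>z\<in>nb E x - {y}. F {{x,y},{x,z}})"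
    unfolding AS_add using AS_swap[OF sg, of "\<lambda>x y. \<Sum>z\<in>nb E y - {x}. F {{x,y},{y,z}}"]
    by (simp add: insert_commute)
  finally show ?thesis by simp
qed

definition Tx :: "'a \<Rightarrow> real" where "Tx x = dg E x * dg E x + ss E x - 2 * dg E x"

lemma sum_nbX: "(\<Sum>z\<in>nb E x. dg E x + dg E z - 2) = Tx x"
  unfolding Tx_def ss_def by (simp add: sum.distrib sum_subtractf dg_nb[OF sg] algebra_simps)

lemma edeg2: "y \<in> nb E x \<Longrightarrow> edeg E {x,y} = dg E x + dg E y - 2"
  unfolding edeg_def using sum2 by (simp add: dg_def)

lemma sum_V_poly: "(\<Sum>x\<in>V. c1 * dg E x ^ 4 + c2 * dg E x ^ 3 + c3 * dg E x ^ 2 + c4 * (dg E x * (dg E x * ss E x)) + c5 * (dg E x * ss E x) + c6 * ss E x ^ 2)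
   = c1 * M1pow 4 V E + c2 * M1pow 3 V E + c3 * M1pow 2 V E + c4 * Qa 2 1 V E + c5 * Qa 1 1 V E + c6 * Ra V E"
  unfolding M1pow_dg[OF sg] sum_dg2_ss[OF sg, symmetric] sum_dg_ss[OF sg, symmetric] Ra_def
  by (simp add: sum.distrib sum_distrib_left)

lemma EM2_conv: "EM2 E = M1pow 4 V E / 2 - 3 * M1pow 3 V E + 6 * M1pow 2 V E + Qa 2 1 V E - 3 * Qa 1 1 V E + Ra V E / 2 - 4 * real (card E)"
proof -
  have "EM2 E = (1/2) * AS V E (\<lambda>x y. \<Sum>z\<in>nb E x - {y}. \<Prod>e\<in>{{x,y},{x,z}}. edeg E e)"
    unfolding EM2_def by (rule adj_sum)
  also have "AS V E (\<lambda>x y. \<Sum>z\<in>nb E x - {y}. \<Prod>e\<in>{{x,y},{x,z}}. edeg E e)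
     = AS V E (\<lambda>x y. (dg E x - 2) * Tx x + dg E y * Tx x - (dg E x + dg E y - 2) ^ 2)"
  proof (rule AS_cong)
    fix x y assume xV: "x \<in> V" and y: "y \<in> nb E x"
    have "(\<Sum>z\<in>nb E x - {y}. \<Prod>e\<in>{{x,y},{x,z}}. edeg E e) = (\<Sum>z\<in>nb E x - {y}. (dg E x + dg E y - 2) * (dg E x + dg E z - 2))"
    proof (rule sum.cong[OF refl])
      fix z assume z: "z \<in> nb E x - {y}"
      have "{x,y} \<noteq> {x,z}" using z by (auto simp: doubleton_eq_iff)
      then show "(\<Prod>e\<in>{{x,y},{x,z}}. edeg E e) = (dg E x + dg E y - 2) * (dg E x + dg E z - 2)"
        using edeg2[OF y] edeg2[of z x] z by simp
    qed
    also have "\<dots> = (dg E x + dg E y - 2) * ((\<Sum>z\<in>nb E x. dg E x + dg E z - 2) - (dg E x + dg E y - 2))"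
      using nb_fin[OF sg] y by (simp add: sum_distrib_left[symmetric] sum_diff1)
    finally show "(\<Sum>z\<in>nb E x - {y}. \<Prod>e\<in>{{x,y},{x,z}}. edeg E e) = (dg E x - 2) * Tx x + dg E y * Tx x - (dg E x + dg E y - 2) ^ 2"
      unfolding sum_nbX by (simp add: algebra_simps power2_eq_square)
  qed
  also have "\<dots> = (\<Sum>x\<in>V. Tx x * Tx x) - AS V E (\<lambda>x y. (dg E x + dg E y - 2) ^ 2)"
  proof -
    have "AS V E (\<lambda>x y. (dg E x - 2) * Tx x + dg E y * Tx x) = (\<Sum>x\<in>V. Tx x * Tx x)"
      unfolding AS_add AS_u[OF sg] AS_left[OF sg, of "\<lambda>y. _" "\<lambda>y. dg E y", simplified]
    proof -
      have "AS V E (\<lambda>x y. dg E y * Tx x) = (\<Sum>x\<in>V. Tx x * ss E x)"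
        using AS_left[OF sg, of "\<lambda>x. Tx x" "\<lambda>y. dg E y"] unfolding ss_def by (simp add: mult.commute)
      then show "(\<Sum>x\<in>V. dg E x * ((dg E x - 2) * Tx x)) + AS V E (\<lambda>x y. dg E y * Tx x) = (\<Sum>x\<in>V. Tx x * Tx x)"
        unfolding Tx_def by (simp add: sum.distrib[symmetric] algebra_simps)
    qed
    then show ?thesis unfolding AS_diff by simp
  qed
  also have "AS V E (\<lambda>x y. (dg E x + dg E y - 2) ^ 2) = 2 * M1pow 3 V E + 2 * Qa 1 1 V E - 8 * M1pow 2 V E + 8 * real (card E)"
  proof -
    have "AS V E (\<lambda>x y. (dg E x + dg E y - 2) ^ 2) = AS V E (\<lambda>x y. 1 * dg E x ^ 2 + 2 * (dg E x * dg E y) + 1 * dg E y ^ 2 + (-4) * dg E x + (-4) * dg E y + 4 * 1)"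
      by (rule AS_cong) (simp add: algebra_simps power2_eq_square)
    then show ?thesis unfolding AS_add AS_cmul atoms[OF sg] by simp
  qed
  also have "(\<Sum>x\<in>V. Tx x * Tx x) = (\<Sum>x\<in>V. 1 * dg E x ^ 4 + (-4) * dg E x ^ 3 + 4 * dg E x ^ 2 + 2 * (dg E x * (dg E x * ss E x)) + (-4) * (dg E x * ss E x) + 1 * ss E x ^ 2)"
    unfolding Tx_def by (intro sum.cong refl) (simp add: algebra_simps power2_eq_square eval_nat_numeral)
  finally show ?thesis unfolding sum_V_poly by (simp add: algebra_simps)
qed

lemma beta_conv: "beta_idx E = M1pow 4 V E - 3 * M1pow 3 V E + 2 * M1pow 2 V E + Qa 2 1 V E - Qa 1 1 V E"
proof -
  have "beta_idx E = (1/2) * AS V E (\<lambda>x y. \<Sum>z\<in>nb E x - {y}. real (deg E (the_elem (\<Inter>{{x,y},{x,z}}))) * (\<Sum>e\<in>{{x,y},{x,z}}. edeg E e))"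
    unfolding beta_idx_def by (rule adj_sum)
  also have "AS V E (\<lambda>x y. \<Sum>z\<in>nb E x - {y}. real (deg E (the_elem (\<Inter>{{x,y},{x,z}}))) * (\<Sum>e\<in>{{x,y},{x,z}}. edeg E e))
     = AS V E (\<lambda>x y. dg E x * (dg E x - 2) * (dg E x + dg E y - 2) + dg E x * Tx x)"
  proof (rule AS_cong)
    fix x y assume xV: "x \<in> V" and y: "y \<in> nb E x"
    have "(\<Sum>z\<in>nb E x - {y}. real (deg E (the_elem (\<Inter>{{x,y},{x,z}}))) * (\<Sum>e\<in>{{x,y},{x,z}}. edeg E e))
       = (\<Sum>z\<in>nb E x - {y}. dg E x * ((dg E x + dg E y - 2) + (dg E x + dg E z - 2)))"
    proof (rule sum.cong[OF refl])
      fix z assume z: "z \<in> nb E x - {y}"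
      have ne: "{x,y} \<noteq> {x,z}" using z by (auto simp: doubleton_eq_iff)
      have "\<Inter>{{x,y},{x,z}} = {x}" using z by auto
      then show "real (deg E (the_elem (\<Inter>{{x,y},{x,z}}))) * (\<Sum>e\<in>{{x,y},{x,z}}. edeg E e) = dg E x * ((dg E x + dg E y - 2) + (dg E x + dg E z - 2))"
        using edeg2[OF y] edeg2[of z x] z ne by (simp add: dg_def)
    qed
    also have "\<dots> = (\<Sum>z\<in>nb E x. dg E x * ((dg E x + dg E y - 2) + (dg E x + dg E z - 2))) - dg E x * (2 * (dg E x + dg E y - 2))"
      using nb_fin[OF sg] y by (simp add: sum_diff1)
    also have "(\<Sum>z\<in>nb E x. dg E x * ((dg E x + dg E y - 2) + (dg E x + dg E z - 2))) = dg E x * (dg E x * (dg E x + dg E y - 2) + (\<Sum>z\<in>nb E x. dg E x + dg E z - 2))"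
    proof -
      have "(\<Sum>z\<in>nb E x. dg E x * ((dg E x + dg E y - 2) + (dg E x + dg E z - 2))) = dg E x * ((\<Sum>z\<in>nb E x. (dg E x + dg E y - 2)) + (\<Sum>z\<in>nb E x. dg E x + dg E z - 2))"
        by (simp only: sum_distrib_left[symmetric] sum.distrib)
      moreover have "(\<Sum>z\<in>nb E x. (dg E x + dg E y - 2)) = dg E x * (dg E x + dg E y - 2)" by (simp add: dg_nb[OF sg])
      ultimately show ?thesis by simp
    qed
    finally show "(\<Sum>z\<in>nb E x - {y}. real (deg E (the_elem (\<Inter>{{x,y},{x,z}}))) * (\<Sum>e\<in>{{x,y},{x,z}}. edeg E e))
       = dg E x * (dg E x - 2) * (dg E x + dg E y - 2) + dg E x * Tx x"
      unfolding sum_nbX by (simp add: algebra_simps)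
  qed
  also have "\<dots> = (\<Sum>x\<in>V. 2 * (dg E x * dg E x - dg E x) * Tx x)"
  proof -
    have "AS V E (\<lambda>x y. dg E x * (dg E x - 2) * (dg E x + dg E y - 2)) = (\<Sum>x\<in>V. dg E x * (dg E x - 2) * Tx x)"
      unfolding AS_def
      by (intro sum.cong refl) (simp add: sum_distrib_left[symmetric] sum_nbX)
    moreover have "AS V E (\<lambda>x y. dg E x * Tx x) = (\<Sum>x\<in>V. dg E x * (dg E x * Tx x))" by (rule AS_u[OF sg])
    ultimately show ?thesis unfolding AS_add by (simp add: sum.distrib[symmetric] algebra_simps)
  qed
  also have "\<dots> = (\<Sum>x\<in>V. 2 * dg E x ^ 4 + (-6) * dg E x ^ 3 + 4 * dg E x ^ 2 + 2 * (dg E x * (dg E x * ss E x)) + (-2) * (dg E x * ss E x) + 0 * ss E x ^ 2)"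
    unfolding Tx_def by (intro sum.cong refl) (simp add: algebra_simps power2_eq_square eval_nat_numeral)
  finally show ?thesis unfolding sum_V_poly by (simp add: algebra_simps)
qed

end


lemma cyc_girth: "has_cycle_len V E k \<Longrightarrow> girth V E \<le> enat k"
  unfolding girth_def by (rule Inf_lower) blast

lemma cyc_list: assumes "length xs = k" "k \<ge> 3" "distinct xs" "set xs \<subseteq> V"
  "\<forall>i<k. {xs ! i, xs ! ((i + 1) mod k)} \<in> E"
  shows "has_cycle_len V E k"
  unfolding has_cycle_len_def
proof (intro conjI exI[of _ "\<lambda>i. xs ! i"])
  show "k \<ge> 3" by fact
  show "inj_on (\<lambda>i. xs ! i) {..<k}" using assms(1,3) by (simp add: inj_on_def nth_eq_iff_index_eq)
  show "(\<lambda>i. xs ! i) ` {..<k} \<subseteq> V" using assms(1,4) nth_mem by fastforce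
  show "\<forall>i<k. {xs ! i, xs ! ((i + 1) mod k)} \<in> E" by fact
qed

lemma girth_good: assumes sg: "simple_graph V E" and g: "girth V E \<ge> 5" shows "good V E"
proof -
  have tri: "trifree E" unfolding trifree_def
  proof (intro allI impI notI)
    fix u v w assume e: "{u,v} \<in> E" "{v,w} \<in> E" "{u,w} \<in> E"
    have d: "u \<noteq> v" "v \<noteq> w" "u \<noteq> w" and V: "u \<in> V" "v \<in> V" "w \<in> V"
      using sg_edge_in[OF sg e(1)] sg_edge_in[OF sg e(2)] sg_edge_in[OF sg e(3)] by auto
    have "\<forall>i<3. {[u,v,w] ! i, [u,v,w] ! ((i + 1) mod 3)} \<in> E"
    proof (intro allI impI)
      fix i :: nat assume "i < 3"
      then have "i = 0 \<or> i = 1 \<or> i = 2" by auto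
      then show "{[u,v,w] ! i, [u,v,w] ! ((i + 1) mod 3)} \<in> E" using e by (auto simp: insert_commute)
    qed
    then have "has_cycle_len V E 3" using d V by (intro cyc_list[of "[u,v,w]"]) auto
    then have "girth V E \<le> enat 3" by (rule cyc_girth)
    with g have "(5::enat) \<le> enat 3" by (rule order_trans)
    then show False by (simp add: numeral_eq_enat)
  qed
  have c4: "c4free E" unfolding c4free_def
  proof (intro allI impI)
    fix u x y v assume e: "{u,x} \<in> E" "{x,y} \<in> E" "{y,v} \<in> E" "{v,u} \<in> E" and n: "x \<noteq> v" "u \<noteq> y"
    have d: "u \<noteq> x" "x \<noteq> y" "y \<noteq> v" "v \<noteq> u" and V: "u \<in> V" "x \<in> V" "y \<in> V" "v \<in> V"
      using sg_edge_in[OF sg e(1)] sg_edge_in[OF sg e(2)] sg_edge_in[OF sg e(3)] sg_edge_in[OF sg e(4)] by auto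
    have "\<forall>i<4. {[u,x,y,v] ! i, [u,x,y,v] ! ((i + 1) mod 4)} \<in> E"
    proof (intro allI impI)
      fix i :: nat assume "i < 4"
      then have "i = 0 \<or> i = 1 \<or> i = 2 \<or> i = 3" by auto
      then show "{[u,x,y,v] ! i, [u,x,y,v] ! ((i + 1) mod 4)} \<in> E" using e by (auto simp: insert_commute)
    qed
    then have "has_cycle_len V E 4" using d n V by (intro cyc_list[of "[u,x,y,v]"]) auto
    then have "girth V E \<le> enat 4" by (rule cyc_girth)
    with g have "(5::enat) \<le> enat 4" by (rule order_trans)
    then show False by (simp add: numeral_eq_enat)
  qed
  show ?thesis unfolding good_def using sg tri c4 by blast
qed


lemma p4_split: assumes gd: "good V E" and e: "e \<in> E"
  shows "real (num_matchings (del_verts_E E e) 4) = ((1/8) * M1 (del_verts_V V e) (del_verts_E E e) ^ 2 + (1/3) * (num_edges (del_verts_E E e) * Fidx (del_verts_V V e) (del_verts_E E e)) + (-1/4) * (num_edges (del_verts_E E e) ^ 2 * M1 (del_verts_V V e) (del_verts_E E e)) + (-1) * EM2 (del_verts_E E e) + 1 * (num_edges (del_verts_E E e) * M2 (del_verts_E E e))) + ((1/24) * real (card (del_verts_E E e)) ^ 4 + (1/4) * real (card (del_verts_E E e)) ^ 3 + (19/24) * real (card (del_verts_E E e)) ^ 2 + (-11/4) * real (card (del_verts_E E e)) + (-5/4) * (real (card (del_verts_E E e)) * M1pow 2 (V - e) (del_verts_E E e)) + (7/2) * M1pow 2 (V - e) (del_verts_E E e) + (-3/2) * M1pow 3 (V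 - e) (del_verts_E E e) + (1/4) * M1pow 4 (V - e) (del_verts_E E e) + (-1) * Qa 1 1 (V - e) (del_verts_E E e))"
proof -
  have gd': "good (V - e) (del_verts_E E e)" by (rule del_good[OF gd])
  have sg': "simple_graph (V - e) (del_verts_E E e)" using gd' good_sg by blast
  show ?thesis unfolding p4[OF gd'] P4form_def EM2_conv[OF sg'] M2_conv[OF sg'] M1_def Fidx_def num_edges_def del_verts_V_def
    by (simp add: algebra_simps)
qed

theorem theorem2p10:
  fixes V :: "'a set" and E :: "'a set set"
  assumes "simple_graph V E" and "girth V E \<ge> 5"
  shows "real (num_matchings E 5) = (1/5) * (
      (1/24) * num_edges E * (num_edges E ^ 4 + 10 * num_edges E ^ 3 + 43 * num_edges E ^ 2
          + 54 * num_edges E - 328)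
    + (5/4) * M1 V E ^ 2
    - (1/2) * alpha_lam 1 E * (num_edges E - 7)
    - (5/6) * alpha_lam 2 E
    - (1/12) * M1 V E * (2 * num_edges E ^ 3 + 30 * num_edges E ^ 2 + 61 * num_edges E - 225)
    + (1/2) * beta_idx E
    + (1/12) * M2 E * (6 * num_edges E ^ 2 + 66 * num_edges E - 239)
    + (1/24) * Fidx V E * (6 * num_edges E ^ 2 + 24 * num_edges E - 149)
    + (1/12) * M1pow 4 V E * (num_edges E + 10)
    + (1/4) * M2sq E
    - EM2 E
    - (5/24) * M1pow 5 V E
    + (1/8) * (\<Sum>e\<in>E. M1 (del_verts_V V e) (del_verts_E E e) ^ 2)
    + (1/3) * (\<Sum>e\<in>E. num_edges (del_verts_E E e) * Fidx (del_verts_V V e) (del_verts_E E e))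
    - (1/4) * (\<Sum>e\<in>E. num_edges (del_verts_E E e) ^ 2 * M1 (del_verts_V V e) (del_verts_E E e))
    - (\<Sum>e\<in>E. EM2 (del_verts_E E e))
    + (\<Sum>e\<in>E. num_edges (del_verts_E E e) * M2 (del_verts_E E e)))"
proof -
  have gd: "good V E" by (rule girth_good[OF assms])
  have sg: "simple_graph V E" by fact
  have "real (Suc 4) * real (num_matchings E (Suc 4)) = (\<Sum>e\<in>E. real (num_matchings (del_verts_E E e) 4))"
    by (rule rec_good[OF gd])
  also have "\<dots> = (\<Sum>e\<in>E. ((1/8) * M1 (del_verts_V V e) (del_verts_E E e) ^ 2 + (1/3) * (num_edges (del_verts_E E e) * Fidx (del_verts_V V e) (del_verts_E E e)) + (-1/4) * (num_edges (del_verts_E E e) ^ 2 * M1 (del_verts_V V e) (del_verts_E E e)) + (-1) * EM2 (del_verts_E E e) + 1 * (num_edges (del_verts_E E e) * M2 (del_verts_E E e))) + ((1/24) * real (card (del_verts_E E e)) ^ 4 + (1/4) * real (card (del_verts_E E e)) ^ 3 + (19/24) * real (card (del_verts_E E e)) ^ 2 + (-11/4) * real (card (del_verts_E E e)) + (-5/4) * (real (card (del_verts_E E e)) * M1pow 2 (V - e) (del_verts_E E e)) + (7/2) * M1pow 2 (V - e) (del_verts_E E e) + (-3/2) * M1pow 3 (V - e) (del_verts_E E e) + (1/4) * M1pow 4 (V - e) (del_verts_E E e) + (-1) * Qa 1 1 (V - e) (del_verts_E E e)))"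
    by (rule sum.cong[OF refl]) (rule p4_split[OF gd])
  also have "\<dots> = ((1/8) * (\<Sum>e\<in>E. M1 (del_verts_V V e) (del_verts_E E e) ^ 2) + (1/3) * (\<Sum>e\<in>E. num_edges (del_verts_E E e) * Fidx (del_verts_V V e) (del_verts_E E e)) + (-1/4) * (\<Sum>e\<in>E. num_edges (del_verts_E E e) ^ 2 * M1 (del_verts_V V e) (del_verts_E E e)) + (-1) * (\<Sum>e\<in>E. EM2 (del_verts_E E e)) + 1 * (\<Sum>e\<in>E. num_edges (del_verts_E E e) * M2 (del_verts_E E e))) + ((1/24) * (\<Sum>e\<in>E. real (card (del_verts_E E e)) ^ 4) + (1/4) * (\<Sum>e\<in>E. real (card (del_verts_E E e)) ^ 3) + (19/24) * (\<Sum>e\<in>E. real (card (del_verts_E E e)) ^ 2) + (-11/4) * (\<Sum>e\<in>E. real (card (del_verts_E E e))) + (-5/4) * (\<Sum>e\<in>E. real (card (del_verts_E E e)) * M1pow 2 (V - e) (del_verts_E E e)) + (7/2) * (\<Sum>e\<in>E. M1pow 2 (V - e) (del_verts_E E e)) + (-3/2) * (\<Sum>e\<in>E. M1pow 3 (V - e) (del_verts_E E e)) + (1/4) * (\<Sum>e\<in>E. M1pow 4 (V - e) (del_verts_E E e)) + (-1) * (\<Sum>e\<in>E. Qa 1 1 (V - e) (del_verts_E E e)))"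
    by (simp only: sum.distrib sum_distrib_left[symmetric])
  finally have main: "real (num_matchings E 5) = (((1/8) * (\<Sum>e\<in>E. M1 (del_verts_V V e) (del_verts_E E e) ^ 2) + (1/3) * (\<Sum>e\<in>E. num_edges (del_verts_E E e) * Fidx (del_verts_V V e) (del_verts_E E e)) + (-1/4) * (\<Sum>e\<in>E. num_edges (del_verts_E E e) ^ 2 * M1 (del_verts_V V e) (del_verts_E E e)) + (-1) * (\<Sum>e\<in>E. EM2 (del_verts_E E e)) + 1 * (\<Sum>e\<in>E. num_edges (del_verts_E E e) * M2 (del_verts_E E e))) + ((1/24) * (\<Sum>e\<in>E. real (card (del_verts_E E e)) ^ 4) + (1/4) * (\<Sum>e\<in>E. real (card (del_verts_E E e)) ^ 3) + (19/24) * (\<Sum>e\<in>E. real (card (del_verts_E E e)) ^ 2) + (-11/4) * (\<Sum>e\<in>E. real (card (del_verts_E E e))) + (-5/4) * (\<Sum>e\<in>E. real (card (del_verts_E E e)) * M1pow 2 (V - e) (del_verts_E E e)) + (7/2) * (\<Sum>e\<in>E. M1pow 2 (V - e) (del_verts_E E e)) + (-3/2) * (\<Sum>e\<in>E. M1pow 3 (V - e) (del_verts_E E e)) + (1/4) * (\<Sum>e\<in>E. M1pow 4 (V - e) (del_verts_E E e)) + (-1) * (\<Sum>e\<in>E. Qa 1 1 (V - e) (del_verts_E E e)))) / 5" by (simp add: eval_nat_numeral)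
  show ?thesis
    unfolding main sum_m1[OF gd] sum_m2[OF gd] sum_m3[OF gd] sum_m4[OF gd] sum_MP[OF gd] sum_P2[OF gd] sum_P3[OF gd]
      sum_P4[OF gd] sum_Q[OF gd]
      EM2_conv[OF sg] M2_conv[OF sg] M2sq_conv[OF sg] alpha1_conv[OF sg] alpha2_conv[OF sg] beta_conv[OF sg]
    unfolding M1_def Fidx_def num_edges_def del_verts_V_def
    by (simp add: field_simps eval_nat_numeral)
qed


end
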